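(* There exist universal constants $0<c_1\le c_2<\infty$ such that for every dimension $d\ge 1$, every radius $r>0$, every $n\ge 1$ and every $\boldsymbol\lambda\in[0,1]^n$, \[ c_1\, r^2 f(\boldsymbol\lambda,1)\;\le\; L(\boldsymbol\lambda,\mathcal D^b_r)\;\le\; c_2\, r^2 f(\boldsymbol\lambda,1), \qquad f(\boldsymbol\lambda,k)=\min_{t\in[0,1]}\Big(\frac{k}{|\{i:\lambda_i\le t\}|}+t^2\Big). \]
   Context: $\boldsymbol\lambda$-contamination: given $\boldsymbol\lambda=(\lambda_1,\dots,\lambda_n)\in[0,1]^n$ and a distribution $P$ on $\mathbb R^d$, a dataset $\mathbf Z=(Z_1,\dots,Z_n)$ is generated as $Z_i=(1-B_i)X_i+B_i\tilde X_i$, where $X_1,\dots,X_n$ are i.i.d. from $P$, $B_i\sim\mathrm{Bernoulli}(\lambda_i)$ are independent (and independent of the $X_i$), and the outliers $(\tilde X_1,\dots,\tilde X_n)$ are drawn from an arbitrary joint distribution (the "adversary") that may depend on the realizations of $X_1,\dots,X_n$ and $B_1,\dots,B_n$. Write $\mathbf Z\sim_{\boldsymbol\lambda}P$. For a class $\mathcal D$ of distributions with means $\mu_P=\mathbb E_{X\sim P}[X]$, the minimax rate is $L(\boldsymbol\lambda,\mathcal D)=\inf_M\sup\mathbb E\|M(\mathbf Z)-\mu_P\|_2^2$, where the infimum is over all estimators $M$ (measurable functions of $\mathbf Z$, which may use knowledge of $\boldsymbol\lambda$) and the supremum is over $P\in\mathcal D$ and over all adversaries. $\mathcal D^b_r$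 is the set of all distributions on $\mathbb R^d$ supported on the closed Euclidean ball of radius $r$ centered at the origin. In $f$, the convention $k/0=+\infty$ is used. *)

theory Defs
  imports "HOL-Probability.Probability"
begin

text \<open>R^d is modelled as functions nat => real, extensional on {..<d},
  with the product Borel sigma-algebra.  A dataset of n points is a function
  nat => (nat => real), extensional on {..<n}.\<close>

definition Rd :: "nat \<Rightarrow> (nat \<Rightarrow> real) measure" where
  "Rd d = PiM {..<d} (\<lambda>_. borel)"

definition Samp :: "nat \<Rightarrow> nat \<Rightarrow> (nat \<Rightarrow> nat \<Rightarrow> real) measure" where
  "Samp d n = PiM {..<n} (\<lambda>_. Rd d)"

definition Bsp :: "nat \<Rightarrow> (nat \<Rightarrow> bool) measure" where
  "Bsp n = PiM {..<n} (\<lambda>_. count_space UNIV)"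

definition sqnorm :: "nat \<Rightarrow> (nat \<Rightarrow> real) \<Rightarrow> real" where
  "sqnorm d v = (\<Sum>i<d. (v i)\<^sup>2)"

definition mean :: "nat \<Rightarrow> (nat \<Rightarrow> real) measure \<Rightarrow> (nat \<Rightarrow> real)" where
  "mean d P = (\<lambda>i\<in>{..<d}. \<integral>x. x i \<partial>P)"

definition Dball :: "nat \<Rightarrow> real \<Rightarrow> (nat \<Rightarrow> real) measure set" where
  "Dball d r = {P. prob_space P \<and> sets P = sets (Rd d) \<and>
                   (AE x in P. sqnorm d x \<le> r\<^sup>2)}"

definition clean_law :: "nat \<Rightarrow> nat \<Rightarrow> (nat \<Rightarrow> real) \<Rightarrow> (nat \<Rightarrow> real) measure
     \<Rightarrow> ((nat \<Rightarrow> nat \<Rightarrow> real) \<times> (nat \<Rightarrow> bool)) measure" where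
  "clean_law d n lam P =
     pair_measure (PiM {..<n} (\<lambda>_. P)) (PiM {..<n} (\<lambda>i. measure_pmf (bernoulli_pmf (lam i))))"

text \<open>An adversary is an arbitrary joint law Q of (X, B, Xtilde) whose (X,B)-marginal
  is the clean law; the outliers Xtilde may thus depend arbitrarily on X and B.\<close>
definition adversaries :: "nat \<Rightarrow> nat \<Rightarrow> (nat \<Rightarrow> real) \<Rightarrow> (nat \<Rightarrow> real) measure
     \<Rightarrow> ((nat \<Rightarrow> nat \<Rightarrow> real) \<times> (nat \<Rightarrow> bool) \<times> (nat \<Rightarrow> nat \<Rightarrow> real)) measure set" where
  "adversaries d n lam P = {Q. prob_space Q \<and>
      sets Q = sets (pair_measure (Samp d n) (pair_measure (Bsp n) (Samp d n))) \<and>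
      distr Q (pair_measure (Samp d n) (Bsp n)) (\<lambda>(x, b, xt). (x, b)) = clean_law d n lam P}"

definition zmap :: "nat \<Rightarrow> (nat \<Rightarrow> nat \<Rightarrow> real) \<times> (nat \<Rightarrow> bool) \<times> (nat \<Rightarrow> nat \<Rightarrow> real)
     \<Rightarrow> (nat \<Rightarrow> nat \<Rightarrow> real)" where
  "zmap n = (\<lambda>(x, b, xt). (\<lambda>i\<in>{..<n}. if b i then xt i else x i))"

definition estimators :: "nat \<Rightarrow> nat \<Rightarrow> ((nat \<Rightarrow> nat \<Rightarrow> real) \<Rightarrow> (nat \<Rightarrow> real)) set" where
  "estimators d n = measurable (Samp d n) (Rd d)"

definition risk :: "nat \<Rightarrow> nat \<Rightarrow> ((nat \<Rightarrow> nat \<Rightarrow> real) \<Rightarrow> (nat \<Rightarrow> real)) \<Rightarrow> (nat \<Rightarrow> real) measure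
     \<Rightarrow> ((nat \<Rightarrow> nat \<Rightarrow> real) \<times> (nat \<Rightarrow> bool) \<times> (nat \<Rightarrow> nat \<Rightarrow> real)) measure \<Rightarrow> ennreal" where
  "risk d n M P Q = (\<integral>\<^sup>+ \<omega>. ennreal (sqnorm d (\<lambda>i. M (zmap n \<omega>) i - mean d P i)) \<partial>Q)"

definition minimax :: "nat \<Rightarrow> nat \<Rightarrow> (nat \<Rightarrow> real) \<Rightarrow> (nat \<Rightarrow> real) measure set \<Rightarrow> ennreal" where
  "minimax d n lam D = (INF M\<in>estimators d n. SUP P\<in>D. SUP Q\<in>adversaries d n lam P. risk d n M P Q)"

text \<open>f(lam, k) = min over t in [0,1] of k / |{i : lam_i <= t}| + t^2, with k/0 = infinity.
  (The minimum is attained; we write it as an infimum.)\<close>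
definition fval :: "nat \<Rightarrow> (nat \<Rightarrow> real) \<Rightarrow> real \<Rightarrow> ennreal" where
  "fval n lam k = (INF t\<in>{0..1::real}.
      (let N = card {i\<in>{..<n}. lam i \<le> t} in
        (if N = 0 then \<infinity> else ennreal (k / real N)) + ennreal (t\<^sup>2)))"

end

theory Submission
  imports Defs
begin

definition pt :: "nat \<Rightarrow> real \<Rightarrow> bool \<Rightarrow> (nat \<Rightarrow> real)" where
  "pt d r b = (\<lambda>c\<in>{..<d}. if b \<and> c = 0 then r else 0)"
definition Pp :: "nat \<Rightarrow> real \<Rightarrow> real \<Rightarrow> (nat \<Rightarrow> real) measure" where
  "Pp d r p = distr (measure_pmf (bernoulli_pmf p)) (Rd d) (pt d r)"

lemma space_Rd: "space (Rd d) = PiE {..<d} (\<lambda>_. UNIV)"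
  by (simp add: Rd_def space_PiM)
lemma space_Samp: "space (Samp d n) = PiE {..<n} (\<lambda>_. PiE {..<d} (\<lambda>_. UNIV))"
  by (simp add: Samp_def space_PiM space_Rd)
lemma space_Bsp: "space (Bsp n) = PiE {..<n} (\<lambda>_. UNIV)"
  by (simp add: Bsp_def space_PiM)
lemma pt_space[simp]: "pt d r b \<in> space (Rd d)"
  by (simp add: space_Rd pt_def)
lemma sqnorm_pt: "sqnorm d (pt d r b) \<le> r\<^sup>2"
  by (cases d) (auto simp: sqnorm_def pt_def lessThan_Suc_eq_insert_0 sum.reindex)

lemma measurable_sqnorm[measurable]: "sqnorm d \<in> borel_measurable (Rd d)"
  unfolding sqnorm_def[abs_def] Rd_def by measurable

lemma Pp_Dball: "Pp d r p \<in> Dball d r"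
  unfolding Dball_def Pp_def
  by (auto intro!: prob_space.prob_space_distr prob_space_measure_pmf simp: AE_distr_iff sqnorm_pt)

lemma mean_Pp:
  assumes "0 \<le> p" "p \<le> 1"
  shows "mean d (Pp d r p) = (\<lambda>c\<in>{..<d}. if c = 0 then p * r else 0)"
proof -
  have "(\<integral>x. x c \<partial>Pp d r p) = (if c = 0 then p * r else 0)" if "c < d" for c
  proof -
    have m: "(\<lambda>x. x c) \<in> borel_measurable (Rd d)" using that unfolding Rd_def by (intro measurable_component_singleton) auto
    have "(\<integral>x. x c \<partial>Pp d r p) = (\<integral>b. pt d r b c \<partial>measure_pmf (bernoulli_pmf p))"
      unfolding Pp_def by (rule integral_distr) (use m that in auto)
    also have "\<dots> = (if c = 0 then p * r else 0)" using assms that by (simp add: pt_def)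
    finally show ?thesis .
  qed
  then show ?thesis unfolding mean_def by (auto intro!: ext)
qed

lemma PiM_distr_pmf:
  assumes I: "finite I" and f: "\<And>x. f x \<in> space N"
  shows "PiM I (\<lambda>i. distr (measure_pmf (p i)) N f) =
         distr (measure_pmf (Pi_pmf I dflt p)) (PiM I (\<lambda>_. N)) (\<lambda>u. \<lambda>i\<in>I. f (u i))"
proof -
  interpret product_prob_space "\<lambda>i. distr (measure_pmf (p i)) N f"
    by (intro product_prob_spaceI prob_space.prob_space_distr) (auto simp: f prob_space_measure_pmf)
  have mf: "(\<lambda>u. \<lambda>i\<in>I. f (u i)) \<in> measurable (measure_pmf (Pi_pmf I dflt p)) (PiM I (\<lambda>_. N))"
    using f by (auto simp: space_PiM)
  show ?thesis
  proof (rule PiM_eqI[symmetric])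
    show "finite I" by fact
    show "sets (distr (measure_pmf (Pi_pmf I dflt p)) (PiM I (\<lambda>_. N)) (\<lambda>u. \<lambda>i\<in>I. f (u i))) =
      sets (PiM I (\<lambda>i. distr (measure_pmf (p i)) N f))"
      by (simp cong: sets_PiM_cong)
  next
    fix A assume A: "\<And>i. i \<in> I \<Longrightarrow> A i \<in> sets (distr (measure_pmf (p i)) N f)"
    then have A': "\<And>i. i \<in> I \<Longrightarrow> A i \<in> sets N" by simp
    have "PiE I A \<in> sets (PiM I (\<lambda>_. N))" using A' by (auto intro!: sets_PiM_I_finite I)
    then have "emeasure (distr (measure_pmf (Pi_pmf I dflt p)) (PiM I (\<lambda>_. N)) (\<lambda>u. \<lambda>i\<in>I. f (u i))) (PiE I A)
       = emeasure (measure_pmf (Pi_pmf I dflt p)) (Pi I (\<lambda>i. f -` A i))"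
      using mf by (subst emeasure_distr) (auto intro!: arg_cong2[where f=emeasure] simp: PiE_def Pi_def)
    also have "\<dots> = ennreal (\<Prod>i\<in>I. measure_pmf.prob (p i) (f -` A i))"
      by (simp add: measure_pmf.emeasure_eq_measure measure_Pi_pmf_Pi[OF I])
    also have "\<dots> = (\<Prod>i\<in>I. emeasure (distr (measure_pmf (p i)) N f) (A i))"
      using A' f by (subst prod_ennreal[symmetric]) (auto simp: emeasure_distr measure_pmf.emeasure_eq_measure intro!: prod.cong)
    finally show "emeasure (distr (measure_pmf (Pi_pmf I dflt p)) (PiM I (\<lambda>_. N)) (\<lambda>u. \<lambda>i\<in>I. f (u i))) (PiE I A) =
      (\<Prod>i\<in>I. emeasure (distr (measure_pmf (p i)) N f) (A i))" .
  qed
qed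

lemma Pi_pmf_pair:
  assumes I: "finite I"
  shows "map_pmf (\<lambda>w. (fst \<circ> w, snd \<circ> w)) (Pi_pmf I (d1, d2) (\<lambda>i. pair_pmf (a i) (b i))) =
         pair_pmf (Pi_pmf I d1 a) (Pi_pmf I d2 b)"
proof (rule pmf_eqI)
  fix uv :: "('a \<Rightarrow> 'b) \<times> ('a \<Rightarrow> 'c)"
  obtain u v where uv: "uv = (u, v)" by (cases uv)
  define z where "z = (\<lambda>i. (u i, v i))"
  have inj: "inj (\<lambda>w::'a \<Rightarrow> 'b \<times> 'c. (fst \<circ> w, snd \<circ> w))"
    by (auto simp: inj_def fun_eq_iff prod_eq_iff)
  have "uv = (fst \<circ> z, snd \<circ> z)" by (simp add: uv z_def o_def)
  then have "pmf (map_pmf (\<lambda>w. (fst \<circ> w, snd \<circ> w)) (Pi_pmf I (d1, d2) (\<lambda>i. pair_pmf (a i) (b i)))) uv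
     = pmf (Pi_pmf I (d1, d2) (\<lambda>i. pair_pmf (a i) (b i))) z"
    using pmf_map_inj'[OF inj] by simp
  also have "\<dots> = pmf (pair_pmf (Pi_pmf I d1 a) (Pi_pmf I d2 b)) uv"
    by (auto simp: uv pmf_pair pmf_Pi[OF I] z_def prod.distrib)
  finally show "pmf (map_pmf (\<lambda>w. (fst \<circ> w, snd \<circ> w)) (Pi_pmf I (d1, d2) (\<lambda>i. pair_pmf (a i) (b i)))) uv =
    pmf (pair_pmf (Pi_pmf I d1 a) (Pi_pmf I d2 b)) uv" .
qed

lemma emeasure_pair_pmf_Times:
  "emeasure (measure_pmf (pair_pmf A B)) (S1 \<times> S2) = emeasure (measure_pmf A) S1 * emeasure (measure_pmf B) S2"
proof -
  have "emeasure (measure_pmf (pair_pmf A B)) (S1 \<times> S2) = (\<integral>\<^sup>+x. indicator (S1 \<times> S2) x \<partial>pair_pmf A B)"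
    by simp
  also have "\<dots> = (\<integral>\<^sup>+a. \<integral>\<^sup>+b. indicator S1 a * indicator S2 b \<partial>B \<partial>A)"
    by (simp add: nn_integral_pair_pmf' indicator_times)
  also have "\<dots> = (\<integral>\<^sup>+a. indicator S1 a * emeasure (measure_pmf B) S2 \<partial>A)"
    by (simp add: nn_integral_cmult)
  also have "\<dots> = emeasure (measure_pmf A) S1 * emeasure (measure_pmf B) S2"
    by (simp add: nn_integral_multc)
  finally show ?thesis .
qed

lemma zmap_measurable[measurable]:
  "zmap n \<in> measurable (Samp d n \<Otimes>\<^sub>M (Bsp n \<Otimes>\<^sub>M Samp d n)) (Samp d n)"
  unfolding zmap_def Samp_def Bsp_def case_prod_beta
  by measurable

lemma risk_integrand_measurable[measurable]:
  assumes "M \<in> estimators d n"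
  shows "(\<lambda>\<omega>. ennreal (sqnorm d (\<lambda>i. M (zmap n \<omega>) i - mu i))) \<in> borel_measurable (Samp d n \<Otimes>\<^sub>M (Bsp n \<Otimes>\<^sub>M Samp d n))"
proof -
  have [measurable]: "M \<in> measurable (Samp d n) (PiM {..<d} (\<lambda>_. borel))" using assms by (simp add: estimators_def Rd_def)
  show ?thesis unfolding sqnorm_def by measurable
qed

definition hsel :: "bool \<times> bool \<times> bool \<Rightarrow> bool" where
  "hsel w = (if fst (snd w) then snd (snd w) else fst w)"

definition omega :: "real \<Rightarrow> real \<Rightarrow> bool \<Rightarrow> real \<Rightarrow> (bool \<times> bool \<times> bool) pmf" where
  "omega p l c q = (if c then pair_pmf (bernoulli_pmf p) (pair_pmf (bernoulli_pmf l) (bernoulli_pmf q))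
     else map_pmf (\<lambda>(x, b). (x, b, x)) (pair_pmf (bernoulli_pmf p) (bernoulli_pmf l)))"

lemma omega_marg: "map_pmf (\<lambda>w. (fst w, fst (snd w))) (omega p l c q) = pair_pmf (bernoulli_pmf p) (bernoulli_pmf l)"
proof (cases c)
  case True
  have "map_pmf (\<lambda>w. (fst w, fst (snd w))) (omega p l c q) =
     map_pmf (\<lambda>(a, b). (id a, fst b)) (pair_pmf (bernoulli_pmf p) (pair_pmf (bernoulli_pmf l) (bernoulli_pmf q)))"
  proof -
    have "(\<lambda>w::bool \<times> bool \<times> bool. (fst w, fst (snd w))) = (\<lambda>(a, b). (id a, fst b))" by auto
    then show ?thesis using True by (simp add: omega_def)
  qed
  also have "\<dots> = pair_pmf (bernoulli_pmf p) (bernoulli_pmf l)"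
    by (simp only: map_pair map_fst_pair_pmf pmf.map_id)
  finally show ?thesis .
next
  case False
  then show ?thesis by (simp add: omega_def pmf.map_comp o_def case_prod_beta)
qed

lemma omega_sel:
  assumes "0 \<le> p" "p \<le> 1" "0 \<le> l" "l \<le> 1" "0 \<le> q" "q \<le> 1"
  shows "map_pmf hsel (omega p l c q) = bernoulli_pmf (if c then (1 - l) * p + l * q else p)"
proof (cases c)
  case False
  then show ?thesis
    by (simp add: omega_def pmf.map_comp o_def case_prod_beta hsel_def map_fst_pair_pmf)
next
  case True
  have a: "0 \<le> (1 - l) * p + l * q" using assms by simp
  have b: "(1 - l) * p + l * q \<le> 1"
  proof -
    have "(1 - l) * p + l * q \<le> (1 - l) * 1 + l * 1"
      using assms by (intro add_mono mult_left_mono) auto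
    then show ?thesis by simp
  qed
  have T: "hsel -` {True} = {(True,True,True),(False,True,True),(True,False,True),(True,False,False)}"
    apply (rule set_eqI)
    subgoal for x by (cases x rule: prod_cases3) (auto simp: hsel_def)
    done
  have F: "hsel -` {False} = {(True,True,False),(False,True,False),(False,False,True),(False,False,False)}"
    apply (rule set_eqI)
    subgoal for x by (cases x rule: prod_cases3) (auto simp: hsel_def)
    done
  show ?thesis
  proof (rule pmf_eqI)
    fix x :: bool
    show "pmf (map_pmf hsel (omega p l c q)) x = pmf (bernoulli_pmf (if c then (1 - l) * p + l * q else p)) x"
      using True assms a b
      by (cases x) (simp_all add: pmf_map measure_pmf_conv_infsetsum T F omega_def pmf_pair algebra_simps)
  qed
qed

abbreviation dd :: "bool \<times> bool \<times> bool" where "dd \<equiv> undefined"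

definition Wc :: "nat \<Rightarrow> real \<Rightarrow> (nat \<Rightarrow> real) \<Rightarrow> nat set \<Rightarrow> (nat \<Rightarrow> real) \<Rightarrow> (nat \<Rightarrow> bool \<times> bool \<times> bool) pmf" where
  "Wc n p lam C q = Pi_pmf {..<n} undefined (\<lambda>i. omega p (lam i) (i \<in> C) (q i))"

definition Fmap :: "nat \<Rightarrow> real \<Rightarrow> nat \<Rightarrow> (nat \<Rightarrow> bool \<times> bool \<times> bool) \<Rightarrow>
    (nat \<Rightarrow> nat \<Rightarrow> real) \<times> (nat \<Rightarrow> bool) \<times> (nat \<Rightarrow> nat \<Rightarrow> real)" where
  "Fmap d r n w = (\<lambda>i\<in>{..<n}. pt d r (fst (w i)), \<lambda>i\<in>{..<n}. fst (snd (w i)), \<lambda>i\<in>{..<n}. pt d r (snd (snd (w i))))"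

abbreviation Tsp :: "nat \<Rightarrow> nat \<Rightarrow> ((nat \<Rightarrow> nat \<Rightarrow> real) \<times> (nat \<Rightarrow> bool) \<times> (nat \<Rightarrow> nat \<Rightarrow> real)) measure" where
  "Tsp d n \<equiv> Samp d n \<Otimes>\<^sub>M (Bsp n \<Otimes>\<^sub>M Samp d n)"

definition Qc :: "nat \<Rightarrow> real \<Rightarrow> nat \<Rightarrow> real \<Rightarrow> (nat \<Rightarrow> real) \<Rightarrow> nat set \<Rightarrow> (nat \<Rightarrow> real) \<Rightarrow> _" where
  "Qc d r n p lam C q = distr (measure_pmf (Wc n p lam C q)) (Tsp d n) (Fmap d r n)"

lemma Fmap_space: "Fmap d r n w \<in> space (Tsp d n)"
  by (simp add: Fmap_def space_pair_measure space_Samp space_Bsp pt_def)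

lemma Fmap_Pi[simp]: "Fmap d r n \<in> UNIV \<rightarrow> space (Tsp d n)"
  using Fmap_space by (simp add: Pi_iff)

lemma Fmap_meas[measurable]: "Fmap d r n \<in> measurable (measure_pmf W) (Tsp d n)"
  using Fmap_space by (simp add: Pi_iff)

lemma Wc_marg:
  "map_pmf (\<lambda>w. ((\<lambda>i. fst (w i)), (\<lambda>i. fst (snd (w i))))) (Wc n p lam C q) =
   pair_pmf (Pi_pmf {..<n} (fst dd) (\<lambda>_. bernoulli_pmf p)) (Pi_pmf {..<n} (fst (snd dd)) (\<lambda>i. bernoulli_pmf (lam i)))"
proof -
  let ?g = "\<lambda>w::bool \<times> bool \<times> bool. (fst w, fst (snd w))"
  have "map_pmf (\<lambda>w. ((\<lambda>i. fst (w i)), (\<lambda>i. fst (snd (w i))))) (Wc n p lam C q) =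
      map_pmf (\<lambda>w. (fst \<circ> w, snd \<circ> w)) (map_pmf (\<lambda>w. ?g \<circ> w) (Wc n p lam C q))"
    by (simp add: pmf.map_comp o_def)
  also have "map_pmf (\<lambda>w. ?g \<circ> w) (Wc n p lam C q) = Pi_pmf {..<n} (?g dd) (\<lambda>i. map_pmf ?g (omega p (lam i) (i \<in> C) (q i)))"
    unfolding Wc_def by (rule Pi_pmf_map[symmetric]) auto
  also have "\<dots> = Pi_pmf {..<n} (fst dd, fst (snd dd)) (\<lambda>i. pair_pmf (bernoulli_pmf p) (bernoulli_pmf (lam i)))"
    by (simp add: omega_marg)
  also have "map_pmf (\<lambda>w. (fst \<circ> w, snd \<circ> w)) \<dots> = pair_pmf (Pi_pmf {..<n} (fst dd) (\<lambda>_. bernoulli_pmf p)) (Pi_pmf {..<n} (fst (snd dd)) (\<lambda>i. bernoulli_pmf (lam i)))"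
    by (rule Pi_pmf_pair) simp
  finally show ?thesis .
qed

lemma PiM_Pp: "PiM {..<n} (\<lambda>_. Pp d r p) = distr (measure_pmf (Pi_pmf {..<n} dflt (\<lambda>_. bernoulli_pmf p))) (Samp d n) (\<lambda>u. \<lambda>i\<in>{..<n}. pt d r (u i))"
  unfolding Pp_def Samp_def by (rule PiM_distr_pmf) auto

lemma PiM_bern: "PiM {..<n} (\<lambda>i. measure_pmf (bernoulli_pmf (lam i))) = distr (measure_pmf (Pi_pmf {..<n} dflt (\<lambda>i. bernoulli_pmf (lam i)))) (Bsp n) (\<lambda>u. \<lambda>i\<in>{..<n}. u i)"
proof -
  have "PiM {..<n} (\<lambda>i. measure_pmf (bernoulli_pmf (lam i))) = PiM {..<n} (\<lambda>i. distr (measure_pmf (bernoulli_pmf (lam i))) (count_space UNIV) (\<lambda>x. x))"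
    by (intro PiM_cong refl distr_id2[symmetric]) simp
  also have "\<dots> = distr (measure_pmf (Pi_pmf {..<n} dflt (\<lambda>i. bernoulli_pmf (lam i)))) (Bsp n) (\<lambda>u. \<lambda>i\<in>{..<n}. u i)"
    unfolding Bsp_def by (rule PiM_distr_pmf) auto
  finally show ?thesis .
qed

lemma Qc_adv: "Qc d r n p lam C q \<in> adversaries d n lam (Pp d r p)"
proof -
  let ?W = "Wc n p lam C q"
  let ?XB = "\<lambda>w. (\<lambda>i\<in>{..<n}. pt d r (fst (w i)), \<lambda>i\<in>{..<n}. fst (snd (w i)))"
  have pr: "(\<lambda>(x, b, xt). (x, b)) \<in> measurable (Tsp d n) (Samp d n \<Otimes>\<^sub>M Bsp n)" by measurable
  have "distr (Qc d r n p lam C q) (Samp d n \<Otimes>\<^sub>M Bsp n) (\<lambda>(x, b, xt). (x, b)) =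
        distr (measure_pmf ?W) (Samp d n \<Otimes>\<^sub>M Bsp n) ((\<lambda>(x, b, xt). (x, b)) \<circ> Fmap d r n)"
    unfolding Qc_def by (rule distr_distr[OF pr]) simp
  also have "(\<lambda>(x, b, xt). (x, b)) \<circ> Fmap d r n = ?XB" by (auto simp: Fmap_def)
  also have "distr (measure_pmf ?W) (Samp d n \<Otimes>\<^sub>M Bsp n) ?XB = clean_law d n lam (Pp d r p)"
    unfolding clean_law_def
  proof (rule pair_measure_eqI[symmetric])
    show "sigma_finite_measure (PiM {..<n} (\<lambda>_. Pp d r p))"
      by (auto intro!: prob_space_imp_sigma_finite prob_space_PiM Pp_Dball[unfolded Dball_def, THEN CollectD, THEN conjunct1])
    show "sigma_finite_measure (PiM {..<n} (\<lambda>i. measure_pmf (bernoulli_pmf (lam i))))"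
      by (auto intro!: prob_space_imp_sigma_finite prob_space_PiM prob_space_measure_pmf)
    show "sets (PiM {..<n} (\<lambda>_. Pp d r p) \<Otimes>\<^sub>M PiM {..<n} (\<lambda>i. measure_pmf (bernoulli_pmf (lam i)))) =
      sets (distr (measure_pmf ?W) (Samp d n \<Otimes>\<^sub>M Bsp n) ?XB)"
      unfolding PiM_Pp[of n d r p undefined] PiM_bern[of n lam undefined] by simp
  next
    fix A B
    assume A: "A \<in> sets (PiM {..<n} (\<lambda>_. Pp d r p))" and B: "B \<in> sets (PiM {..<n} (\<lambda>i. measure_pmf (bernoulli_pmf (lam i))))"
    let ?X' = "\<lambda>u. \<lambda>i\<in>{..<n}. pt d r (u i)" and ?R = "\<lambda>u::nat \<Rightarrow> bool. \<lambda>i\<in>{..<n}. u i"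
    have A': "A \<in> sets (Samp d n)" using A by (simp add: PiM_Pp[of n d r p undefined])
    have B': "B \<in> sets (Bsp n)" using B by (simp add: PiM_bern[of n lam undefined])
    have XBm: "?XB \<in> measurable (measure_pmf ?W) (Samp d n \<Otimes>\<^sub>M Bsp n)"
      by (simp add: space_pair_measure space_Samp space_Bsp pt_def)
    have "emeasure (distr (measure_pmf ?W) (Samp d n \<Otimes>\<^sub>M Bsp n) ?XB) (A \<times> B) = emeasure (measure_pmf ?W) (?XB -` (A \<times> B))"
      using A' B' XBm by (subst emeasure_distr) auto
    also have "?XB -` (A \<times> B) = (\<lambda>w. ((\<lambda>i. fst (w i)), (\<lambda>i. fst (snd (w i))))) -` (?X' -` A \<times> ?R -` B)"
      by auto
    also have "emeasure (measure_pmf ?W) \<dots> = emeasure (measure_pmf (map_pmf (\<lambda>w. ((\<lambda>i. fst (w i)), (\<lambda>i. fst (snd (w i))))) ?W)) (?X' -` A \<times> ?R -` B)"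
      by simp
    also have "\<dots> = emeasure (measure_pmf (Pi_pmf {..<n} (fst dd) (\<lambda>_. bernoulli_pmf p))) (?X' -` A) *
                    emeasure (measure_pmf (Pi_pmf {..<n} (fst (snd dd)) (\<lambda>i. bernoulli_pmf (lam i)))) (?R -` B)"
      by (simp only: Wc_marg emeasure_pair_pmf_Times)
    also have "\<dots> = emeasure (PiM {..<n} (\<lambda>_. Pp d r p)) A * emeasure (PiM {..<n} (\<lambda>i. measure_pmf (bernoulli_pmf (lam i)))) B"
      using A' B' by (simp add: PiM_Pp[of n d r p "fst dd"] PiM_bern[of n lam "fst (snd dd)"] emeasure_distr space_Samp space_Bsp pt_def)
    finally show "emeasure (PiM {..<n} (\<lambda>_. Pp d r p)) A * emeasure (PiM {..<n} (\<lambda>i. measure_pmf (bernoulli_pmf (lam i)))) B =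
       emeasure (distr (measure_pmf ?W) (Samp d n \<Otimes>\<^sub>M Bsp n) ?XB) (A \<times> B)" by (rule sym)
  qed
  finally have marg: "distr (Qc d r n p lam C q) (Samp d n \<Otimes>\<^sub>M Bsp n) (\<lambda>(x, b, xt). (x, b)) = clean_law d n lam (Pp d r p)" .
  have "prob_space (Qc d r n p lam C q)"
    unfolding Qc_def by (auto intro!: prob_space.prob_space_distr prob_space_measure_pmf)
  moreover have "sets (Qc d r n p lam C q) = sets (Tsp d n)"
    unfolding Qc_def by simp
  ultimately show ?thesis
    using marg unfolding adversaries_def by blast
qed

definition acoef :: "real \<Rightarrow> (nat \<Rightarrow> real) \<Rightarrow> nat set \<Rightarrow> (nat \<Rightarrow> real) \<Rightarrow> nat \<Rightarrow> real" where
  "acoef p lam C q i = (if i \<in> C then (1 - lam i) * p + lam i * q i else p)"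

lemma risk_Qc:
  assumes M: "M \<in> estimators d n" and p: "0 \<le> p" "p \<le> 1"
    and lam: "\<And>i. i < n \<Longrightarrow> 0 \<le> lam i \<and> lam i \<le> 1" and q: "\<And>i. i < n \<Longrightarrow> 0 \<le> q i \<and> q i \<le> 1"
  shows "risk d n M P (Qc d r n p lam C q) =
    (\<Sum>\<beta>\<in>PiE_dflt {..<n} (hsel dd) (\<lambda>_. UNIV).
       ennreal (sqnorm d (\<lambda>c. M (\<lambda>i\<in>{..<n}. pt d r (\<beta> i)) c - mean d P c)) *
       ennreal (\<Prod>i<n. pmf (bernoulli_pmf (acoef p lam C q i)) (\<beta> i)))"
proof -
  let ?g = "\<lambda>z. ennreal (sqnorm d (\<lambda>c. M z c - mean d P c))"
  have "risk d n M P (Qc d r n p lam C q) = (\<integral>\<^sup>+w. ?g (zmap n (Fmap d r n w)) \<partial>measure_pmf (Wc n p lam C q))"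
    unfolding risk_def Qc_def
    by (subst nn_integral_distr) (auto intro: risk_integrand_measurable[OF M])
  also have "\<dots> = (\<integral>\<^sup>+w. ?g (\<lambda>i\<in>{..<n}. pt d r ((hsel \<circ> w) i)) \<partial>measure_pmf (Wc n p lam C q))"
    by (intro nn_integral_cong arg_cong[where f="?g"]) (auto simp: zmap_def Fmap_def hsel_def)
  also have "\<dots> = (\<integral>\<^sup>+\<beta>. ?g (\<lambda>i\<in>{..<n}. pt d r (\<beta> i)) \<partial>measure_pmf (map_pmf (\<lambda>w. hsel \<circ> w) (Wc n p lam C q)))"
    by simp
  also have "map_pmf (\<lambda>w. hsel \<circ> w) (Wc n p lam C q) = Pi_pmf {..<n} (hsel dd) (\<lambda>i. map_pmf hsel (omega p (lam i) (i \<in> C) (q i)))"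
    unfolding Wc_def by (rule Pi_pmf_map[symmetric]) auto
  also have "\<dots> = Pi_pmf {..<n} (hsel dd) (\<lambda>i. bernoulli_pmf (acoef p lam C q i))"
    by (intro Pi_pmf_cong refl) (simp add: omega_sel p lam q acoef_def)
  also have "(\<integral>\<^sup>+\<beta>. ?g (\<lambda>i\<in>{..<n}. pt d r (\<beta> i)) \<partial>measure_pmf \<dots>) =
     (\<Sum>\<beta>\<in>PiE_dflt {..<n} (hsel dd) (\<lambda>_. UNIV). ?g (\<lambda>i\<in>{..<n}. pt d r (\<beta> i)) *
        ennreal (pmf (Pi_pmf {..<n} (hsel dd) (\<lambda>i. bernoulli_pmf (acoef p lam C q i))) \<beta>))"
    apply (rule nn_integral_measure_pmf_support)
      apply (intro finite_PiE_dflt; simp)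
     apply simp
    using set_Pi_pmf_subset[of "{..<n}" "hsel dd"] by (auto simp: PiE_dflt_def)
  also have "\<dots> = (\<Sum>\<beta>\<in>PiE_dflt {..<n} (hsel dd) (\<lambda>_. UNIV). ?g (\<lambda>i\<in>{..<n}. pt d r (\<beta> i)) *
        ennreal (\<Prod>i<n. pmf (bernoulli_pmf (acoef p lam C q i)) (\<beta> i)))"
    by (intro sum.cong refl) (subst pmf_Pi', auto simp: PiE_dflt_def)
  finally show ?thesis .
qed


lemma sum_PiE_dflt_prod:
  fixes f :: "'a \<Rightarrow> bool \<Rightarrow> real"
  assumes I: "finite I"
  shows "(\<Sum>\<beta>\<in>PiE_dflt I dflt (\<lambda>_. UNIV). \<Prod>i\<in>I. f i (\<beta> i)) = (\<Prod>i\<in>I. f i True + f i False)"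
proof -
  let ?e = "\<lambda>h x. if x \<in> I then h x else dflt"
  have inj: "inj_on ?e (PiE I (\<lambda>_. UNIV))"
    by (auto simp: inj_on_def PiE_def extensional_def fun_eq_iff)
  have "(\<Sum>\<beta>\<in>PiE_dflt I dflt (\<lambda>_. UNIV). \<Prod>i\<in>I. f i (\<beta> i)) = (\<Sum>\<beta>\<in>?e ` PiE I (\<lambda>_. UNIV). \<Prod>i\<in>I. f i (\<beta> i))"
    by (simp add: dflt_image_PiE)
  also have "\<dots> = (\<Sum>h\<in>PiE I (\<lambda>_. UNIV). \<Prod>i\<in>I. f i (?e h i))"
    by (subst sum.reindex[OF inj]) simp
  also have "\<dots> = (\<Sum>h\<in>PiE I (\<lambda>_. UNIV). \<Prod>i\<in>I. f i (h i))"
    by (intro sum.cong prod.cong) auto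
  also have "\<dots> = (\<Prod>i\<in>I. \<Sum>y\<in>UNIV. f i y)"
    by (rule prod_sum_PiE[symmetric]) (auto simp: I)
  also have "\<dots> = (\<Prod>i\<in>I. f i True + f i False)"
    by (simp add: UNIV_bool add.commute)
  finally show ?thesis .
qed

lemma sqrt_prod_real:
  fixes f :: "'a \<Rightarrow> real"
  shows "sqrt (prod f A) = (\<Prod>i\<in>A. sqrt (f i))"
  by (induction A rule: infinite_finite_induct) (auto simp: real_sqrt_mult)

lemma sqrt_sum_sq:
  fixes x y :: real
  assumes "0 \<le> x" "0 \<le> y"
  shows "(sqrt x + sqrt y)\<^sup>2 = x + y + 2 * sqrt (x * y)"
  using assms by (simp add: power2_sum real_sqrt_mult)

lemma affinity_bound:
  fixes \<delta> :: real
  assumes "0 \<le> \<delta>" "\<delta> \<le> 1/2"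
  shows "(sqrt (1/2 * (1/2 + \<delta>)) + sqrt ((1 - 1/2) * (1 - (1/2 + \<delta>))))\<^sup>2 \<ge> 1 - 2 * \<delta>\<^sup>2"
proof -
  have a: "0 \<le> 1/2 * (1/2 + \<delta>)" "0 \<le> (1 - 1/2) * (1 - (1/2 + \<delta>))" using assms by auto
  have "(sqrt (1/2 * (1/2 + \<delta>)) + sqrt ((1 - 1/2) * (1 - (1/2 + \<delta>))))\<^sup>2
      = 1/2 * (1/2 + \<delta>) + (1 - 1/2) * (1 - (1/2 + \<delta>)) + 2 * sqrt (1/2 * (1/2 + \<delta>) * ((1 - 1/2) * (1 - (1/2 + \<delta>))))"
    using a by (rule sqrt_sum_sq)
  also have "1/2 * (1/2 + \<delta>) * ((1 - 1/2) * (1 - (1/2 + \<delta>))) = (1/4) * (1/4 - \<delta>\<^sup>2)"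
    by (simp add: algebra_simps power2_eq_square)
  also have "sqrt ((1/4) * (1/4 - \<delta>\<^sup>2)) \<ge> 1/4 - \<delta>\<^sup>2"
  proof (rule real_le_rsqrt)
    have "\<delta>\<^sup>2 \<le> 1/4" using mult_mono[of \<delta> "1/2" \<delta> "1/2"] assms by (simp add: power2_eq_square)
    then have t: "0 \<le> 1/4 - \<delta>\<^sup>2" "1/4 - \<delta>\<^sup>2 \<le> 1/4" by auto
    show "(1/4 - \<delta>\<^sup>2)\<^sup>2 \<le> 1/4 * (1/4 - \<delta>\<^sup>2)"
      using mult_right_mono[OF t(2) t(1)] by (simp add: power2_eq_square)
  qed
  moreover have "1/2 * (1/2 + \<delta>) + (1 - 1/2) * (1 - (1/2 + \<delta>)) = (1/2::real)" by (simp add: algebra_simps)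
  ultimately show ?thesis by linarith
qed

lemma overlap_bound:
  fixes a b :: "nat \<Rightarrow> real"
  assumes I: "finite I" and K: "K \<subseteq> I"
    and ab: "\<And>i. i \<in> I \<Longrightarrow> 0 \<le> a i \<and> a i \<le> 1"
    and eq: "\<And>i. i \<in> I - K \<Longrightarrow> b i = a i"
    and aK: "\<And>i. i \<in> K \<Longrightarrow> a i = 1/2 \<and> b i = 1/2 + \<delta>"
    and \<delta>: "0 \<le> \<delta>" "\<delta> \<le> 1/2" and card: "real (card K) * \<delta>\<^sup>2 \<le> 1/4"
  shows "(\<Sum>\<beta>\<in>PiE_dflt I dflt (\<lambda>_. UNIV).
           min (\<Prod>i\<in>I. pmf (bernoulli_pmf (a i)) (\<beta> i)) (\<Prod>i\<in>I. pmf (bernoulli_pmf (b i)) (\<beta> i))) \<ge> 1/4"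
proof -
  let ?S = "PiE_dflt I dflt (\<lambda>_. UNIV)"
  define u where "u \<beta> = (\<Prod>i\<in>I. pmf (bernoulli_pmf (a i)) (\<beta> i))" for \<beta>
  define v where "v \<beta> = (\<Prod>i\<in>I. pmf (bernoulli_pmf (b i)) (\<beta> i))" for \<beta>
  have b01: "0 \<le> b i \<and> b i \<le> 1" if "i \<in> I" for i
    using ab[OF that] eq[of i] aK[of i] \<delta> that by (cases "i \<in> K") auto
  have dsq: "\<delta>\<^sup>2 \<le> 1/4" using mult_mono[of \<delta> "1/2" \<delta> "1/2"] \<delta> by (simp add: power2_eq_square)
  have fin: "finite ?S" by (intro finite_PiE_dflt I) auto
  have u0: "u \<beta> \<ge> 0" "v \<beta> \<ge> 0" for \<beta> by (auto simp: u_def v_def intro!: prod_nonneg)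
  have su: "sum u ?S = 1" unfolding u_def
    by (subst sum_PiE_dflt_prod[OF I]) (auto intro!: prod.neutral simp: ab)
  have sv: "sum v ?S = 1" unfolding v_def
    by (subst sum_PiE_dflt_prod[OF I]) (auto intro!: prod.neutral simp: b01)
  define s where "s i = sqrt (pmf (bernoulli_pmf (a i)) True * pmf (bernoulli_pmf (b i)) True) +
                        sqrt (pmf (bernoulli_pmf (a i)) False * pmf (bernoulli_pmf (b i)) False)" for i
  have s0: "s i \<ge> 0" for i by (simp add: s_def)
  have "(\<Sum>\<beta>\<in>?S. sqrt (u \<beta> * v \<beta>)) = (\<Sum>\<beta>\<in>?S. \<Prod>i\<in>I. sqrt (pmf (bernoulli_pmf (a i)) (\<beta> i) * pmf (bernoulli_pmf (b i)) (\<beta> i)))"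
    by (simp add: u_def v_def sqrt_prod_real prod.distrib[symmetric])
  also have "\<dots> = (\<Prod>i\<in>I. s i)"
    by (subst sum_PiE_dflt_prod[OF I]) (simp add: s_def)
  finally have sq: "(\<Sum>\<beta>\<in>?S. sqrt (u \<beta> * v \<beta>)) = (\<Prod>i\<in>I. s i)" .
  have s1: "s i = 1" if "i \<in> I - K" for i
  proof -
    have "a i * a i = (a i)\<^sup>2" "(1 - a i) * (1 - a i) = (1 - a i)\<^sup>2" by (simp_all add: power2_eq_square)
    then show ?thesis using that ab[of i] eq[OF that] by (simp add: s_def)
  qed
  have s2: "(s i)\<^sup>2 \<ge> 1 - 2 * \<delta>\<^sup>2" if "i \<in> K" for i
  proof -
    have ai: "a i = 1/2" and bi: "b i = 1/2 + \<delta>" using aK[OF that] by auto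
    have "0 \<le> 1/2 + \<delta>" "1/2 + \<delta> \<le> 1" using \<delta> by auto
    then show ?thesis using affinity_bound[OF \<delta>] by (simp only: s_def ai bi pmf_bernoulli_True pmf_bernoulli_False)
  qed
  have "(\<Prod>i\<in>I. s i)\<^sup>2 = (\<Prod>i\<in>K. (s i)\<^sup>2) * (\<Prod>i\<in>I-K. (s i)\<^sup>2)"
    using K I by (simp add: prod_power_distrib[symmetric] prod.subset_diff power_mult_distrib mult.commute)
  also have "(\<Prod>i\<in>I-K. (s i)\<^sup>2) = 1" using s1 by simp
  also have "(\<Prod>i\<in>K. (s i)\<^sup>2) \<ge> (\<Prod>i\<in>K. 1 - 2 * \<delta>\<^sup>2)"
  proof (rule prod_mono)
    fix i assume "i \<in> K"
    moreover have "0 \<le> 1 - 2 * \<delta>\<^sup>2"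
      using dsq by simp
    ultimately show "0 \<le> 1 - 2 * \<delta>\<^sup>2 \<and> 1 - 2 * \<delta>\<^sup>2 \<le> (s i)\<^sup>2" using s2 by auto
  qed
  moreover have "(\<Prod>i\<in>K. 1 - 2 * \<delta>\<^sup>2) = (1 + (- 2 * \<delta>\<^sup>2)) ^ card K" by simp
  moreover have "(1 + (- 2 * \<delta>\<^sup>2)) ^ card K \<ge> 1 + real (card K) * (- 2 * \<delta>\<^sup>2)"
    by (rule Bernoulli_inequality) (use dsq in simp)
  ultimately have P: "(\<Prod>i\<in>I. s i)\<^sup>2 \<ge> 1/2" using card by simp
  have "(\<Sum>\<beta>\<in>?S. sqrt (u \<beta> * v \<beta>))\<^sup>2 = (\<Sum>\<beta>\<in>?S. sqrt (min (u \<beta>) (v \<beta>)) * sqrt (max (u \<beta>) (v \<beta>)))\<^sup>2"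
    by (intro arg_cong[where f="\<lambda>x. x\<^sup>2"] sum.cong refl) (simp add: real_sqrt_mult[symmetric] min_def max_def mult.commute)
  also have "\<dots> \<le> (\<Sum>\<beta>\<in>?S. (sqrt (min (u \<beta>) (v \<beta>)))\<^sup>2) * (\<Sum>\<beta>\<in>?S. (sqrt (max (u \<beta>) (v \<beta>)))\<^sup>2)"
    by (rule Cauchy_Schwarz_ineq_sum)
  also have "\<dots> = (\<Sum>\<beta>\<in>?S. min (u \<beta>) (v \<beta>)) * (\<Sum>\<beta>\<in>?S. max (u \<beta>) (v \<beta>))"
    using u0 by (simp add: le_max_iff_disj)
  also have "(\<Sum>\<beta>\<in>?S. max (u \<beta>) (v \<beta>)) \<le> 2"
  proof -
    have "(\<Sum>\<beta>\<in>?S. max (u \<beta>) (v \<beta>)) \<le> (\<Sum>\<beta>\<in>?S. u \<beta> + v \<beta>)"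
      by (intro sum_mono) (use u0 in auto)
    then show ?thesis using su sv by (simp add: sum.distrib)
  qed
  then have "(\<Sum>\<beta>\<in>?S. min (u \<beta>) (v \<beta>)) * (\<Sum>\<beta>\<in>?S. max (u \<beta>) (v \<beta>)) \<le> (\<Sum>\<beta>\<in>?S. min (u \<beta>) (v \<beta>)) * 2"
    by (intro mult_left_mono) (auto intro!: sum_nonneg simp: u0)
  finally have "(\<Prod>i\<in>I. s i)\<^sup>2 \<le> (\<Sum>\<beta>\<in>?S. min (u \<beta>) (v \<beta>)) * 2" using sq by simp
  with P show ?thesis unfolding u_def v_def by simp
qed



lemma fval_le:
  assumes "0 \<le> t" "t \<le> 1" "card {i\<in>{..<n}. lam i \<le> t} \<ge> 1" "0 \<le> k"
  shows "fval n lam k \<le> ennreal (k / card {i\<in>{..<n}. lam i \<le> t} + t\<^sup>2)"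
proof -
  have "fval n lam k \<le> (let N = card {i\<in>{..<n}. lam i \<le> t} in
        (if N = 0 then \<infinity> else ennreal (k / real N)) + ennreal (t\<^sup>2))"
    unfolding fval_def by (rule INF_lower) (use assms in auto)
  also have "\<dots> = ennreal (k / card {i\<in>{..<n}. lam i \<le> t} + t\<^sup>2)"
  proof -
    have ne: "card {i\<in>{..<n}. lam i \<le> t} \<noteq> 0" using assms(3) by linarith
    show ?thesis using assms by (simp only: Let_def ne if_False ennreal_plus[symmetric] divide_nonneg_nonneg of_nat_0_le_iff zero_le_power2)
  qed
  finally show ?thesis .
qed

lemma fval_le2:
  assumes "n \<ge> 1" "\<forall>i<n. 0 \<le> lam i \<and> lam i \<le> 1"
  shows "fval n lam 1 \<le> ennreal 2"
proof -
  have c: "{i\<in>{..<n}. lam i \<le> 1} = {..<n}" using assms by auto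
  have "fval n lam 1 \<le> ennreal (1 / card {i\<in>{..<n}. lam i \<le> 1} + 1\<^sup>2)"
    by (rule fval_le) (use assms c in auto)
  also have "\<dots> \<le> ennreal 2" using assms c by (intro ennreal_leI) auto
  finally show ?thesis .
qed

lemma sq_pair_bound:
  fixes x a b :: real
  shows "(x - a)\<^sup>2 + (x - b)\<^sup>2 \<ge> (a - b)\<^sup>2 / 2"
proof -
  have "0 \<le> (2 * x - a - b)\<^sup>2" by simp
  then show ?thesis by (simp add: power2_eq_square field_simps)
qed

lemma sqnorm_ge_0:
  assumes "1 \<le> d"
  shows "sqnorm d v \<ge> (v 0)\<^sup>2"
  unfolding sqnorm_def using assms by (intro member_le_sum) auto

lemma sqnorm_nonneg: "sqnorm d v \<ge> 0"
  unfolding sqnorm_def by (intro sum_nonneg) auto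



lemma ennreal_half_lemma:
  fixes R0 R1 S :: ennreal
  assumes "R0 \<le> S" "R1 \<le> S" "ennreal x \<le> R0 + R1" "0 \<le> x"
  shows "ennreal (x / 2) \<le> S"
proof -
  have "ennreal x \<le> S + S" using assms(3) add_mono[OF assms(1,2)] by (rule order_trans)
  then show ?thesis
  proof (cases S rule: ennreal_cases)
    case (real s)
    have "ennreal (s + s) = ennreal s + ennreal s" using real by (intro ennreal_plus) auto
    with \<open>ennreal x \<le> S + S\<close> real have "ennreal x \<le> ennreal (s + s)" by simp
    then have "x \<le> s + s" using real by (simp add: ennreal_le_iff)
    then have "x / 2 \<le> s" by simp
    then show ?thesis using real by (simp add: ennreal_leI)
  qed simp
qed

lemma lower_main:
  assumes d: "1 \<le> d" and r: "0 < r" and n: "1 \<le> n" and lam: "\<forall>i<n. 0 \<le> lam i \<and> lam i \<le> 1"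
    and M: "M \<in> estimators d n"
  shows "ennreal (1/128 * r\<^sup>2) * fval n lam 1 \<le> (SUP P\<in>Dball d r. SUP Q\<in>adversaries d n lam P. risk d n M P Q)"
proof -
  define F where "F = enn2real (fval n lam 1)"
  have fle: "fval n lam 1 \<le> ennreal 2" by (rule fval_le2[OF n lam])
  then have fF: "fval n lam 1 = ennreal F" unfolding F_def
    by (metis ennreal_enn2real ennreal_less_top order_le_less_trans top.not_eq_extremum)
  have F0: "0 \<le> F" by (simp add: F_def)
  have F2: "F \<le> 2" using fle unfolding fF by (subst (asm) ennreal_le_iff) auto
  define \<delta> where "\<delta> = sqrt (F / 8)"
  have \<delta>0: "0 \<le> \<delta>" using F0 by (simp add: \<delta>_def)
  have \<delta>sq: "\<delta>\<^sup>2 = F / 8" using F0 by (simp add: \<delta>_def)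
  have \<delta>1: "\<delta> \<le> 1/2"
  proof -
    have "\<delta> \<le> sqrt (1/4)" unfolding \<delta>_def using F2 by (subst real_sqrt_le_iff) simp
    also have "sqrt (1/4) = (1/2::real)" by (simp add: real_sqrt_divide)
    finally show ?thesis .
  qed
  define C where "C = {i. i < n \<and> 2 * \<delta> \<le> lam i}"
  define K where "K = {i. i < n \<and> lam i < 2 * \<delta>}"
  define q where "q i = (if 2 * \<delta> \<le> lam i then 1/2 + \<delta> / lam i else 1/2)" for i
  have lam': "\<And>i. i < n \<Longrightarrow> 0 \<le> lam i \<and> lam i \<le> 1" using lam by auto
  have q01: "0 \<le> q i \<and> q i \<le> 1" if "i < n" for i
  proof (cases "2 * \<delta> \<le> lam i")
    case True
    have h: "\<delta> / lam i \<le> 1/2"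
    proof (cases "lam i = 0")
      case False
      then have "lam i > 0" using lam'[OF that] by linarith
      then show ?thesis using True by (simp add: divide_simps)
    qed simp
    have qi: "q i = 1/2 + \<delta> / lam i" using True by (simp add: q_def)
    have "0 \<le> \<delta> / lam i" using \<delta>0 lam'[OF that] by simp
    then show ?thesis using h qi by linarith
  qed (simp add: q_def)
  define a where "a i = acoef (1/2) lam C q i" for i
  define b where "b i = acoef (1/2 + \<delta>) lam {} q i" for i
  have b_eq: "b i = 1/2 + \<delta>" for i by (simp add: b_def acoef_def)
  have aC: "a i = 1/2 + \<delta>" if "i \<in> C" for i
  proof (cases "lam i = 0")
    case True
    then have "\<delta> = 0" using that \<delta>0 by (simp add: C_def)
    then show ?thesis using that True by (simp add: a_def acoef_def C_def q_def)
  next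
    case False
    then show ?thesis using that by (simp add: a_def acoef_def C_def q_def field_simps)
  qed
  have aK: "a i = 1/2" if "i \<notin> C" for i using that by (simp add: a_def acoef_def)
  have KC: "K = {..<n} - C" by (auto simp: K_def C_def)
  have card: "real (card K) * \<delta>\<^sup>2 \<le> 1/4"
  proof (cases "K = {}")
    case False
    have finK: "finite K" by (simp add: K_def)
    define t where "t = Max (lam ` K)"
    have tK: "t \<in> lam ` K" unfolding t_def using False finK by (intro Max_in) auto
    then have t01: "0 \<le> t" "t \<le> 1" "t < 2 * \<delta>" using lam' by (auto simp: K_def)
    have Ksub: "K \<subseteq> {i\<in>{..<n}. lam i \<le> t}"
      unfolding t_def using finK by (auto simp: K_def intro!: Max_ge)
    have cK: "card K \<le> card {i\<in>{..<n}. lam i \<le> t}" by (rule card_mono[OF _ Ksub]) simp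
    have cK1: "card K \<ge> 1" using False finK by (simp add: Suc_le_eq card_gt_0_iff)
    have "ennreal F \<le> ennreal (1 / card {i\<in>{..<n}. lam i \<le> t} + t\<^sup>2)"
      unfolding fF[symmetric] by (rule fval_le) (use t01 cK cK1 in auto)
    then have "F \<le> 1 / card {i\<in>{..<n}. lam i \<le> t} + t\<^sup>2"
      by (subst (asm) ennreal_le_iff) (auto intro!: add_nonneg_nonneg)
    also have "1 / card {i\<in>{..<n}. lam i \<le> t} \<le> 1 / real (card K)"
      using cK cK1 by (intro divide_left_mono) auto
    also have "t\<^sup>2 < (2 * \<delta>)\<^sup>2" using t01 by (intro power_strict_mono) auto
    finally have "F < 1 / real (card K) + F / 2" using \<delta>sq by (simp add: power_mult_distrib)
    then have "F / 2 < 1 / real (card K)" by simp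
    then have "real (card K) * F < 2" using cK1 by (simp add: field_simps)
    moreover have "real (card K) * F = 8 * (real (card K) * \<delta>\<^sup>2)" using \<delta>sq by simp
    ultimately show ?thesis by linarith
  qed simp
  have ov: "(\<Sum>\<beta>\<in>PiE_dflt {..<n} (hsel dd) (\<lambda>_. UNIV).
           min (\<Prod>i\<in>{..<n}. pmf (bernoulli_pmf (a i)) (\<beta> i)) (\<Prod>i\<in>{..<n}. pmf (bernoulli_pmf (b i)) (\<beta> i))) \<ge> 1/4"
  proof (rule overlap_bound[where K=K and \<delta>=\<delta>])
    show "K \<subseteq> {..<n}" by (auto simp: K_def)
    show "0 \<le> a i \<and> a i \<le> 1" if "i \<in> {..<n}" for i
      using aC[of i] aK[of i] \<delta>0 \<delta>1 by (cases "i \<in> C") auto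
    show "b i = a i" if "i \<in> {..<n} - K" for i using that aC[of i] b_eq[of i] by (auto simp: KC)
    show "a i = 1/2 \<and> b i = 1/2 + \<delta>" if "i \<in> K" for i using that aK[of i] b_eq[of i] by (auto simp: KC)
  qed (use \<delta>0 \<delta>1 card in auto)
  define P0 where "P0 = Pp d r (1/2)"
  define P1 where "P1 = Pp d r (1/2 + \<delta>)"
  define Q0 where "Q0 = Qc d r n (1/2) lam C q"
  define Q1 where "Q1 = Qc d r n (1/2 + \<delta>) lam {} q"
  let ?S = "PiE_dflt {..<n} (hsel dd) (\<lambda>_. UNIV)"
  let ?z = "\<lambda>\<beta>. (\<lambda>i\<in>{..<n}. pt d r (\<beta> i))"
  define g0 where "g0 \<beta> = sqnorm d (\<lambda>c. M (?z \<beta>) c - mean d P0 c)" for \<beta>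
  define g1 where "g1 \<beta> = sqnorm d (\<lambda>c. M (?z \<beta>) c - mean d P1 c)" for \<beta>
  define \<pi>0 where "\<pi>0 \<beta> = (\<Prod>i<n. pmf (bernoulli_pmf (a i)) (\<beta> i))" for \<beta>
  define \<pi>1 where "\<pi>1 \<beta> = (\<Prod>i<n. pmf (bernoulli_pmf (b i)) (\<beta> i))" for \<beta>
  have R0: "risk d n M P0 Q0 = (\<Sum>\<beta>\<in>?S. ennreal (g0 \<beta>) * ennreal (\<pi>0 \<beta>))"
    unfolding Q0_def g0_def \<pi>0_def a_def by (rule risk_Qc[OF M]) (use lam' q01 in auto)
  have R1: "risk d n M P1 Q1 = (\<Sum>\<beta>\<in>?S. ennreal (g1 \<beta>) * ennreal (\<pi>1 \<beta>))"
    unfolding Q1_def g1_def \<pi>1_def b_def by (rule risk_Qc[OF M]) (use lam' q01 \<delta>0 \<delta>1 in auto)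
  have pi0: "\<pi>0 \<beta> \<ge> 0" "\<pi>1 \<beta> \<ge> 0" for \<beta> by (auto simp: \<pi>0_def \<pi>1_def intro!: prod_nonneg)
  have g0: "g0 \<beta> \<ge> 0" "g1 \<beta> \<ge> 0" for \<beta> by (auto simp: g0_def g1_def sqnorm_nonneg)
  define D where "D = (\<delta> * r)\<^sup>2 / 2"
  have gsum: "g0 \<beta> + g1 \<beta> \<ge> D" for \<beta>
  proof -
    have m0: "mean d P0 0 = 1/2 * r" using d by (simp add: P0_def mean_Pp)
    have m1: "mean d P1 0 = (1/2 + \<delta>) * r" using d \<delta>0 \<delta>1 by (simp add: P1_def mean_Pp)
    have "g0 \<beta> + g1 \<beta> \<ge> (M (?z \<beta>) 0 - mean d P0 0)\<^sup>2 + (M (?z \<beta>) 0 - mean d P1 0)\<^sup>2"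
      unfolding g0_def g1_def by (intro add_mono sqnorm_ge_0[OF d, of "\<lambda>c. M (?z \<beta>) c - _ c", simplified])
    moreover have "(M (?z \<beta>) 0 - mean d P0 0)\<^sup>2 + (M (?z \<beta>) 0 - mean d P1 0)\<^sup>2 \<ge> (mean d P0 0 - mean d P1 0)\<^sup>2 / 2"
      by (rule sq_pair_bound)
    moreover have "(mean d P0 0 - mean d P1 0)\<^sup>2 / 2 = D"
      by (simp add: m0 m1 D_def power2_eq_square algebra_simps)
    ultimately show ?thesis by linarith
  qed
  have eqR: "risk d n M P0 Q0 + risk d n M P1 Q1 = (\<Sum>\<beta>\<in>?S. ennreal (g0 \<beta> * \<pi>0 \<beta> + g1 \<beta> * \<pi>1 \<beta>))"
    unfolding R0 R1 sum.distrib[symmetric]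
    by (intro sum.cong refl) (simp add: g0 pi0 ennreal_mult[symmetric] ennreal_plus[symmetric] del: ennreal_plus)
  have monoR: "(\<Sum>\<beta>\<in>?S. ennreal (D * min (\<pi>0 \<beta>) (\<pi>1 \<beta>))) \<le> (\<Sum>\<beta>\<in>?S. ennreal (g0 \<beta> * \<pi>0 \<beta> + g1 \<beta> * \<pi>1 \<beta>))"
  proof (intro sum_mono ennreal_leI)
    fix \<beta>
    have "D * min (\<pi>0 \<beta>) (\<pi>1 \<beta>) \<le> (g0 \<beta> + g1 \<beta>) * min (\<pi>0 \<beta>) (\<pi>1 \<beta>)"
      using gsum[of \<beta>] pi0 by (intro mult_right_mono) auto
    also have "\<dots> \<le> g0 \<beta> * \<pi>0 \<beta> + g1 \<beta> * \<pi>1 \<beta>"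
      using g0[of \<beta>] by (simp add: distrib_right add_mono mult_left_mono)
    finally show "D * min (\<pi>0 \<beta>) (\<pi>1 \<beta>) \<le> g0 \<beta> * \<pi>0 \<beta> + g1 \<beta> * \<pi>1 \<beta>" .
  qed
  have sumE: "(\<Sum>\<beta>\<in>?S. ennreal (D * min (\<pi>0 \<beta>) (\<pi>1 \<beta>))) = ennreal (D * (\<Sum>\<beta>\<in>?S. min (\<pi>0 \<beta>) (\<pi>1 \<beta>)))"
    by (subst sum_ennreal) (auto simp: D_def pi0 sum_distrib_left)
  have q4: "ennreal (D * (1/4)) \<le> ennreal (D * (\<Sum>\<beta>\<in>?S. min (\<pi>0 \<beta>) (\<pi>1 \<beta>)))"
    using ov by (intro ennreal_leI mult_left_mono) (auto simp: D_def \<pi>0_def \<pi>1_def lessThan_def)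
  have sum_ge: "ennreal (D / 4) \<le> risk d n M P0 Q0 + risk d n M P1 Q1"
    using q4 monoR unfolding eqR sumE[symmetric] by simp
  have P0D: "P0 \<in> Dball d r" and P1D: "P1 \<in> Dball d r" by (simp_all add: P0_def P1_def Pp_Dball)
  have Q0A: "Q0 \<in> adversaries d n lam P0" unfolding Q0_def P0_def by (rule Qc_adv)
  have Q1A: "Q1 \<in> adversaries d n lam P1" unfolding Q1_def P1_def by (rule Qc_adv)
  let ?SUP = "(SUP P\<in>Dball d r. SUP Q\<in>adversaries d n lam P. risk d n M P Q)"
  have le0: "risk d n M P0 Q0 \<le> ?SUP"
    by (rule SUP_upper2[OF P0D], rule SUP_upper[OF Q0A])
  have le1: "risk d n M P1 Q1 \<le> ?SUP"
    by (rule SUP_upper2[OF P1D], rule SUP_upper[OF Q1A])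
  have "ennreal (D / 4 / 2) \<le> ?SUP"
    by (rule ennreal_half_lemma[OF le0 le1 sum_ge]) (simp add: D_def)
  moreover have "ennreal (1/128 * r\<^sup>2) * fval n lam 1 = ennreal (D / 4 / 2)"
    unfolding fF using F0 \<delta>sq by (simp add: ennreal_mult[symmetric] D_def power_mult_distrib)
  ultimately show ?thesis by simp
qed



lemma ennreal_mult_INF_le:
  fixes c :: ennreal and g :: "'a \<Rightarrow> ennreal"
  assumes c: "c < top" and T: "T \<noteq> {}" and le: "\<And>t. t \<in> T \<Longrightarrow> x \<le> c * g t"
  shows "x \<le> c * (INF t\<in>T. g t)"
proof -
  have cont: "continuous_on UNIV (\<lambda>y::ennreal. c * y)"
    by (rule ennreal_continuous_on_cmult[OF c]) (rule continuous_on_id)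
  have "c * Inf (g ` T) = (INF s\<in>g ` T. c * s)"
  proof (rule continuous_at_Inf_mono)
    show "mono ((*) c)" by (auto simp: mono_def mult_left_mono)
    show "continuous (at_right (Inf (g ` T))) ((*) c)"
      using cont by (simp add: continuous_on_eq_continuous_within continuous_at_imp_continuous_at_within)
  qed (use T in auto)
  also have "\<dots> = (INF t\<in>T. c * g t)" by (simp add: image_image)
  finally show ?thesis using le by (auto intro!: INF_greatest)
qed



definition clip :: "nat \<Rightarrow> real \<Rightarrow> (nat \<Rightarrow> real) \<Rightarrow> (nat \<Rightarrow> real)" where
  "clip d r v = (if sqnorm d v \<le> r\<^sup>2 then restrict v {..<d} else (\<lambda>c\<in>{..<d}. 0))"

definition Est :: "nat \<Rightarrow> real \<Rightarrow> nat set \<Rightarrow> (nat \<Rightarrow> nat \<Rightarrow> real) \<Rightarrow> (nat \<Rightarrow> real)" where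
  "Est d r S z = (\<lambda>c\<in>{..<d}. (\<Sum>i\<in>S. clip d r (z i) c) / real (card S))"

lemma clip_meas[measurable]: "clip d r \<in> measurable (Rd d) (Rd d)"
proof -
  have [measurable]: "Measurable.pred (Rd d) (\<lambda>v. sqnorm d v \<le> r\<^sup>2)" by measurable
  have [measurable]: "(\<lambda>v. restrict v {..<d}) \<in> measurable (Rd d) (Rd d)"
    unfolding Rd_def by (rule measurable_restrict) auto
  have [measurable]: "(\<lambda>v::nat\<Rightarrow>real. (\<lambda>c\<in>{..<d}. 0::real)) \<in> measurable (Rd d) (Rd d)"
    by (rule measurable_const) (simp add: space_Rd)
  show ?thesis unfolding clip_def by measurable
qed

lemma Est_est:
  assumes "S \<subseteq> {..<n}"
  shows "Est d r S \<in> estimators d n"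
proof -
  have [measurable]: "(\<lambda>z. z i) \<in> measurable (Samp d n) (Rd d)" if "i \<in> S" for i
    using assms that unfolding Samp_def by (intro measurable_component_singleton) auto
  have [measurable]: "(\<lambda>z. clip d r (z i) c) \<in> borel_measurable (Samp d n)" if "i \<in> S" "c < d" for i c
  proof -
    have "(\<lambda>v. v c) \<in> borel_measurable (Rd d)" using that unfolding Rd_def by (intro measurable_component_singleton) auto
    then show ?thesis using that by measurable
  qed
  show ?thesis unfolding estimators_def Est_def Rd_def
    by (rule measurable_restrict) (auto intro!: borel_measurable_divide borel_measurable_sum)
qed

lemma sqnorm_clip: "sqnorm d (clip d r v) \<le> r\<^sup>2"
  by (auto simp: clip_def sqnorm_def)

lemma clip_coord_sq:
  assumes "c < d" shows "(clip d r v c)\<^sup>2 \<le> r\<^sup>2"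
proof -
  have "(clip d r v c)\<^sup>2 \<le> sqnorm d (clip d r v)"
    unfolding sqnorm_def using assms by (intro member_le_sum) auto
  then show ?thesis using sqnorm_clip[of d r v] by linarith
qed

lemma sqnorm_diff_le: "sqnorm d (\<lambda>c. u c + v c) \<le> 2 * sqnorm d u + 2 * sqnorm d v"
proof -
  have "(u c + v c)\<^sup>2 \<le> 2 * (u c)\<^sup>2 + 2 * (v c)\<^sup>2" for c
  proof -
    have "0 \<le> (u c - v c)\<^sup>2" by simp
    then show ?thesis by (simp add: power2_eq_square algebra_simps)
  qed
  then show ?thesis unfolding sqnorm_def by (simp add: sum_distrib_left sum.distrib[symmetric] sum_mono)
qed

lemma sqnorm_clip_diff: "sqnorm d (\<lambda>c. clip d r u c - clip d r v c) \<le> 4 * r\<^sup>2"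
proof -
  have "sqnorm d (\<lambda>c. clip d r u c + (- clip d r v c)) \<le> 2 * sqnorm d (clip d r u) + 2 * sqnorm d (\<lambda>c. - clip d r v c)"
    by (rule sqnorm_diff_le)
  also have "sqnorm d (\<lambda>c. - clip d r v c) = sqnorm d (clip d r v)" by (simp add: sqnorm_def)
  finally show ?thesis using sqnorm_clip[of d r u] sqnorm_clip[of d r v] by simp
qed

definition cb :: "nat set \<Rightarrow> (nat \<Rightarrow> bool) \<Rightarrow> real" where
  "cb S b = (\<Sum>i\<in>S. if b i then 1 else 0)"

definition sqA :: "nat \<Rightarrow> real \<Rightarrow> nat set \<Rightarrow> (nat \<Rightarrow> real) \<Rightarrow> (nat \<Rightarrow> nat \<Rightarrow> real) \<Rightarrow> real" where
  "sqA d r S mu x = sqnorm d (\<lambda>c. (\<Sum>i\<in>S. clip d r (x i) c - mu c) / real (card S))"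

lemma pointwise_bound:
  assumes S: "S \<subseteq> {..<n}" "finite S" "card S > 0"
  shows "sqnorm d (\<lambda>c. Est d r S (zmap n (x, b, xt)) c - mu c) \<le>
     2 * sqA d r S mu x + 8 * r\<^sup>2 / (real (card S))\<^sup>2 * (cb S b)\<^sup>2"
proof -
  let ?k = "real (card S)"
  define Sb where "Sb = {i\<in>S. b i}"
  define w where "w i c = clip d r (xt i) c - clip d r (x i) c" for i c
  define A where "A c = (\<Sum>i\<in>S. clip d r (x i) c - mu c) / ?k" for c
  define D where "D c = (\<Sum>i\<in>Sb. w i c) / ?k" for c
  have k0: "?k > 0" using S by simp
  have eq: "Est d r S (zmap n (x, b, xt)) c - mu c = A c + D c" if "c < d" for c
  proof -
    have z: "clip d r (zmap n (x, b, xt) i) c = clip d r (x i) c + (if b i then w i c else 0)" if "i \<in> S" for i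
      using that S by (auto simp: zmap_def w_def)
    have "Est d r S (zmap n (x, b, xt)) c = (\<Sum>i\<in>S. clip d r (x i) c + (if b i then w i c else 0)) / ?k"
      using \<open>c < d\<close> by (simp add: Est_def z cong: sum.cong)
    also have "\<dots> = (\<Sum>i\<in>S. clip d r (x i) c) / ?k + (\<Sum>i\<in>Sb. w i c) / ?k"
      by (simp add: sum.distrib Sb_def sum.inter_filter[symmetric] S add_divide_distrib)
    also have "(\<Sum>i\<in>S. clip d r (x i) c) / ?k = A c + mu c"
      using k0 by (simp add: A_def sum_subtractf field_simps)
    finally show ?thesis by (simp add: D_def)
  qed
  have "sqnorm d (\<lambda>c. Est d r S (zmap n (x, b, xt)) c - mu c) = sqnorm d (\<lambda>c. A c + D c)"
    unfolding sqnorm_def by (intro sum.cong) (auto simp: eq)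
  also have "\<dots> \<le> 2 * sqnorm d A + 2 * sqnorm d D" by (rule sqnorm_diff_le)
  also have "sqnorm d A = sqA d r S mu x" unfolding sqA_def A_def[abs_def] ..
  also have "sqnorm d D \<le> 4 * r\<^sup>2 / ?k\<^sup>2 * (cb S b)\<^sup>2"
  proof -
    have finSb: "finite Sb" using S by (simp add: Sb_def)
    have cbeq: "cb S b = real (card Sb)"
      by (simp add: cb_def Sb_def sum.inter_filter[symmetric] S)
    have "sqnorm d D = (\<Sum>c<d. (\<Sum>i\<in>Sb. w i c)\<^sup>2) / ?k\<^sup>2"
      by (simp add: sqnorm_def D_def power_divide sum_divide_distrib[symmetric])
    also have "(\<Sum>c<d. (\<Sum>i\<in>Sb. w i c)\<^sup>2) \<le> (\<Sum>c<d. (\<Sum>i\<in>Sb. (w i c)\<^sup>2) * card Sb)"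
      by (intro sum_mono sum_squared_le_sum_of_squares)
    also have "\<dots> = (\<Sum>i\<in>Sb. sqnorm d (w i)) * card Sb"
      by (simp add: sqnorm_def sum_distrib_right[symmetric] sum.swap[of _ Sb])
    also have "(\<Sum>i\<in>Sb. sqnorm d (w i)) \<le> (\<Sum>i\<in>Sb. 4 * r\<^sup>2)"
      by (intro sum_mono) (simp add: w_def[abs_def] sqnorm_clip_diff)
    finally have "sqnorm d D \<le> (card Sb * (4 * r\<^sup>2)) * card Sb / ?k\<^sup>2"
      using k0 by (simp add: divide_right_mono mult_right_mono)
    then show ?thesis using cbeq by (simp add: power2_eq_square field_simps)
  qed
  finally show ?thesis by simp
qed



lemma cb_meas[measurable]:
  assumes "S \<subseteq> {..<n}"
  shows "cb S \<in> borel_measurable (Bsp n)"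
proof -
  have [measurable]: "(\<lambda>b. b i) \<in> measurable (Bsp n) (count_space UNIV)" if "i \<in> S" for i
    using assms that unfolding Bsp_def by (intro measurable_component_singleton) auto
  show ?thesis unfolding cb_def[abs_def] by (intro borel_measurable_sum) auto
qed

lemma prod_if_two:
  fixes g :: "'b \<Rightarrow> 'a::comm_monoid_mult"
  assumes "finite I" "i \<in> I" "j \<in> I"
  shows "(\<Prod>l\<in>I. if l \<in> {i, j} then g l else 1) = (\<Prod>l\<in>{i, j}. g l)"
proof -
  have "(\<Prod>l\<in>I. if l \<in> {i, j} then g l else 1) = (\<Prod>l\<in>{l\<in>I. l \<in> {i, j}}. g l)"
    by (rule prod.inter_filter[symmetric]) fact
  also have "{l\<in>I. l \<in> {i, j}} = {i, j}" using assms by auto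
  finally show ?thesis .
qed

lemma E_pair:
  assumes I: "finite I" and ij: "i \<in> I" "j \<in> I" and lam: "\<And>l. l \<in> I \<Longrightarrow> 0 \<le> lam l \<and> lam l \<le> 1"
  shows "(\<integral>\<^sup>+\<beta>. ennreal ((if \<beta> i then 1 else 0) * (if \<beta> j then 1 else 0)) \<partial>measure_pmf (Pi_pmf I dflt (\<lambda>l. bernoulli_pmf (lam l))))
         = (\<Prod>l\<in>{i, j}. ennreal (lam l))"
proof -
  let ?f = "\<lambda>l (v::bool). ennreal (if l \<in> {i, j} then (if v then 1 else 0) else 1)"
  have "(\<integral>\<^sup>+\<beta>. ennreal ((if \<beta> i then 1 else 0) * (if \<beta> j then 1 else 0)) \<partial>measure_pmf (Pi_pmf I dflt (\<lambda>l. bernoulli_pmf (lam l))))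
      = (\<integral>\<^sup>+\<beta>. (\<Prod>l\<in>I. ?f l (\<beta> l)) \<partial>measure_pmf (Pi_pmf I dflt (\<lambda>l. bernoulli_pmf (lam l))))"
  proof (rule nn_integral_cong)
    fix \<beta> :: "'a \<Rightarrow> bool"
    have "(\<Prod>l\<in>I. ?f l (\<beta> l)) = (\<Prod>l\<in>I. if l \<in> {i, j} then ennreal (if \<beta> l then 1 else 0) else 1)"
      by (intro prod.cong) auto
    also have "\<dots> = (\<Prod>l\<in>{i, j}. ennreal (if \<beta> l then 1 else 0))"
      by (rule prod_if_two[OF I ij])
    also have "\<dots> = ennreal ((if \<beta> i then 1 else 0) * (if \<beta> j then 1 else 0))"
      by (cases "i = j") (auto simp: ennreal_mult[symmetric])
    finally show "ennreal ((if \<beta> i then 1 else 0) * (if \<beta> j then 1 else 0)) = (\<Prod>l\<in>I. ?f l (\<beta> l))" by simp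
  qed
  also have "\<dots> = (\<Prod>l\<in>I. \<integral>\<^sup>+v. ?f l v \<partial>measure_pmf (bernoulli_pmf (lam l)))"
    by (rule nn_integral_prod_Pi_pmf) fact
  also have "\<dots> = (\<Prod>l\<in>I. if l \<in> {i, j} then ennreal (lam l) else 1)"
    using lam by (intro prod.cong refl) (auto simp: ennreal_plus[symmetric] simp del: ennreal_plus)
  also have "\<dots> = (\<Prod>l\<in>{i, j}. ennreal (lam l))"
    by (rule prod_if_two[OF I ij])
  finally show ?thesis .
qed

lemma E1:
  assumes S: "S \<subseteq> {..<n}" and lam: "\<And>i. i < n \<Longrightarrow> 0 \<le> lam i \<and> lam i \<le> 1"
    and lt: "\<And>i. i \<in> S \<Longrightarrow> lam i \<le> t" and t: "0 \<le> t"
  shows "(\<integral>\<^sup>+b. ennreal ((cb S b)\<^sup>2) \<partial>PiM {..<n} (\<lambda>i. measure_pmf (bernoulli_pmf (lam i))))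
     \<le> ennreal ((real (card S))\<^sup>2 * t\<^sup>2 + real (card S) * t)"
proof -
  have finS: "finite S" using S finite_subset by blast
  let ?W = "Pi_pmf {..<n} undefined (\<lambda>i. bernoulli_pmf (lam i))"
  let ?e = "\<lambda>(\<beta>::nat \<Rightarrow> bool) i. (if \<beta> i then 1 else 0::real)"
  have "(\<integral>\<^sup>+b. ennreal ((cb S b)\<^sup>2) \<partial>PiM {..<n} (\<lambda>i. measure_pmf (bernoulli_pmf (lam i))))
      = (\<integral>\<^sup>+\<beta>. ennreal ((cb S (\<lambda>i\<in>{..<n}. \<beta> i))\<^sup>2) \<partial>measure_pmf ?W)"
    unfolding PiM_bern[of n lam undefined]
    by (subst nn_integral_distr) (use S in \<open>auto simp: space_Bsp\<close>)
  also have "\<dots> = (\<integral>\<^sup>+\<beta>. (\<Sum>i\<in>S. \<Sum>j\<in>S. ennreal (?e \<beta> i * ?e \<beta> j)) \<partial>measure_pmf ?W)"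
  proof (rule nn_integral_cong)
    fix \<beta> :: "nat \<Rightarrow> bool"
    have "cb S (\<lambda>i\<in>{..<n}. \<beta> i) = (\<Sum>i\<in>S. ?e \<beta> i)"
      using S unfolding cb_def by (intro sum.cong) auto
    then have "(cb S (\<lambda>i\<in>{..<n}. \<beta> i))\<^sup>2 = (\<Sum>i\<in>S. \<Sum>j\<in>S. ?e \<beta> i * ?e \<beta> j)"
      by (simp add: power2_eq_square sum_product)
    then show "ennreal ((cb S (\<lambda>i\<in>{..<n}. \<beta> i))\<^sup>2) = (\<Sum>i\<in>S. \<Sum>j\<in>S. ennreal (?e \<beta> i * ?e \<beta> j))"
      by (simp add: sum_ennreal sum_nonneg)
  qed
  also have "\<dots> = (\<Sum>i\<in>S. \<integral>\<^sup>+\<beta>. (\<Sum>j\<in>S. ennreal (?e \<beta> i * ?e \<beta> j)) \<partial>measure_pmf ?W)"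
    by (rule nn_integral_sum) simp
  also have "\<dots> = (\<Sum>i\<in>S. \<Sum>j\<in>S. \<integral>\<^sup>+\<beta>. ennreal (?e \<beta> i * ?e \<beta> j) \<partial>measure_pmf ?W)"
    by (intro sum.cong refl nn_integral_sum) simp
  also have "\<dots> \<le> (\<Sum>i\<in>S. \<Sum>j\<in>S. ennreal (t\<^sup>2 + (if i = j then t else 0)))"
  proof (intro sum_mono)
    fix i j assume ij: "i \<in> S" "j \<in> S"
    then have ij': "i \<in> {..<n}" "j \<in> {..<n}" using S by auto
    have "(\<integral>\<^sup>+\<beta>. ennreal (?e \<beta> i * ?e \<beta> j) \<partial>measure_pmf ?W) = (\<Prod>l\<in>{i, j}. ennreal (lam l))"
      by (rule E_pair) (use ij' lam in auto)
    also have "\<dots> \<le> ennreal (t\<^sup>2 + (if i = j then t else 0))"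
    proof (cases "i = j")
      case True
      then show ?thesis using lt[OF ij(1)] t by (auto intro!: ennreal_leI simp del: ennreal_plus) (smt (verit) zero_le_power2)
    next
      case False
      have "lam i * lam j \<le> t * t" using lt ij lam ij' t by (intro mult_mono) auto
      then show ?thesis using False lam ij' t
        by (auto simp: ennreal_mult[symmetric] power2_eq_square intro!: ennreal_leI)
    qed
    finally show "(\<integral>\<^sup>+\<beta>. ennreal (?e \<beta> i * ?e \<beta> j) \<partial>measure_pmf ?W) \<le> ennreal (t\<^sup>2 + (if i = j then t else 0))" .
  qed
  also have "\<dots> = ennreal ((real (card S))\<^sup>2 * t\<^sup>2 + real (card S) * t)"
  proof -
    have "(\<Sum>i\<in>S. \<Sum>j\<in>S. t\<^sup>2 + (if i = j then t else 0)) = (real (card S))\<^sup>2 * t\<^sup>2 + real (card S) * t"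
      using finS by (simp add: sum.distrib power2_eq_square algebra_simps)
    moreover have "(\<Sum>i\<in>S. \<Sum>j\<in>S. ennreal (t\<^sup>2 + (if i = j then t else 0))) = ennreal (\<Sum>i\<in>S. \<Sum>j\<in>S. t\<^sup>2 + (if i = j then t else 0))"
      using t by (simp add: sum_ennreal sum_nonneg del: ennreal_plus)
    ultimately show ?thesis by simp
  qed
  finally show ?thesis .
qed



lemma PiM_integral_ij:
  fixes f :: "'a \<Rightarrow> real" and I :: "'i set"
  assumes P: "prob_space P" and I: "finite I" and ij: "i \<in> I" "j \<in> I"
    and f: "integrable P f" "integrable P (\<lambda>v. f v * f v)"
  shows "integrable (PiM I (\<lambda>_. P)) (\<lambda>x. f (x i) * f (x j)) \<and>
         (\<integral>x. f (x i) * f (x j) \<partial>PiM I (\<lambda>_. P)) = (if i = j then (\<integral>v. f v * f v \<partial>P) else (\<integral>v. f v \<partial>P) * (\<integral>v. f v \<partial>P))"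
proof -
  interpret product_prob_space "\<lambda>_. P" by (intro product_prob_spaceI P)
  interpret P: prob_space P by (rule assms(1))
  show ?thesis
  proof (cases "i = j")
    case True
    let ?g = "\<lambda>l v. if l = i then f v * f v else 1"
    have int: "integrable P (?g l)" for l using f by (cases "l = i"; cases "l = j") simp_all
    have eq: "(\<Prod>l\<in>I. ?g l (x l)) = f (x i) * f (x j)" for x
      using True I ij by (simp add: prod.delta)
    have "integrable (PiM I (\<lambda>_. P)) (\<lambda>x. \<Prod>l\<in>I. ?g l (x l))"
      by (rule product_integrable_prod[OF I]) (use int in auto)
    moreover have "(\<integral>x. (\<Prod>l\<in>I. ?g l (x l)) \<partial>PiM I (\<lambda>_. P)) = (\<Prod>l\<in>I. \<integral>v. ?g l v \<partial>P)"
      by (rule product_integral_prod[OF I]) (use int in auto)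
    moreover have "(\<Prod>l\<in>I. \<integral>v. ?g l v \<partial>P) = (\<integral>v. f v * f v \<partial>P)"
    proof -
      have "(\<Prod>l\<in>I. \<integral>v. ?g l v \<partial>P) = (\<Prod>l\<in>I. if l = i then (\<integral>v. f v * f v \<partial>P) else 1)"
        by (intro prod.cong refl) (auto simp: prob_space.prob_space[OF assms(1)])
      then show ?thesis using I ij by (simp add: prod.delta)
    qed
    ultimately show ?thesis using True eq by simp
  next
    case False
    let ?g = "\<lambda>l v. if l \<in> {i, j} then f v else 1"
    have int: "integrable P (?g l)" for l using f by (cases "l = i"; cases "l = j") simp_all
    have eq: "(\<Prod>l\<in>I. ?g l (x l)) = f (x i) * f (x j)" for x
    proof -
      have "(\<Prod>l\<in>I. if l \<in> {i, j} then f (x l) else 1) = (\<Prod>l\<in>{i, j}. f (x l))" by (rule prod_if_two[OF I ij])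
      also have "\<dots> = f (x i) * f (x j)" using False by simp
      finally show ?thesis by simp
    qed
    have "integrable (PiM I (\<lambda>_. P)) (\<lambda>x. \<Prod>l\<in>I. ?g l (x l))"
      by (rule product_integrable_prod[OF I]) (use int in auto)
    moreover have "(\<integral>x. (\<Prod>l\<in>I. ?g l (x l)) \<partial>PiM I (\<lambda>_. P)) = (\<Prod>l\<in>I. \<integral>v. ?g l v \<partial>P)"
      by (rule product_integral_prod[OF I]) (use int in auto)
    moreover have "(\<Prod>l\<in>I. \<integral>v. ?g l v \<partial>P) = (\<integral>v. f v \<partial>P) * (\<integral>v. f v \<partial>P)"
    proof -
      have "(\<Prod>l\<in>I. \<integral>v. ?g l v \<partial>P) = (\<Prod>l\<in>I. if l \<in> {i, j} then (\<integral>v. f v \<partial>P) else 1)"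
        by (intro prod.cong refl) (auto simp: prob_space.prob_space[OF assms(1)])
      also have "\<dots> = (\<Prod>l\<in>{i, j}. (\<integral>v. f v \<partial>P))" by (rule prod_if_two[OF I ij])
      finally show ?thesis using False by simp
    qed
    ultimately show ?thesis using False eq by simp
  qed
qed



lemma E2:
  assumes P: "P \<in> Dball d r" and S: "S \<subseteq> {..<n}" "card S > 0"
  shows "(\<integral>\<^sup>+x. ennreal (sqA d r S (mean d P) x) \<partial>PiM {..<n} (\<lambda>_. P)) \<le> ennreal (r\<^sup>2 / card S)"
proof -
  have Pp: "prob_space P" and Ps: "sets P = sets (Rd d)" and Pae: "AE v in P. sqnorm d v \<le> r\<^sup>2"
    using P by (auto simp: Dball_def)
  interpret P: prob_space P by (rule Pp)
  have finS: "finite S" using S(2) card_gt_0_iff by blast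
  define k where "k = real (card S)"
  have k0: "k > 0" using S by (simp add: k_def)
  define mu where "mu = mean d P"
  define \<phi> where "\<phi> c v = clip d r v c - mu c" for c v
  have mclip: "(\<lambda>v. clip d r v c) \<in> borel_measurable P" if "c < d" for c
  proof -
    have "(\<lambda>v. v c) \<in> borel_measurable (Rd d)" using that unfolding Rd_def by (intro measurable_component_singleton) auto
    then have "(\<lambda>v. clip d r v c) \<in> borel_measurable (Rd d)" by measurable
    then show ?thesis using Ps by (simp cong: measurable_cong_sets)
  qed
  have bclip: "\<bar>clip d r v c\<bar> \<le> \<bar>r\<bar>" if "c < d" for v c
    using clip_coord_sq[OF that, of r v] by (simp add: abs_le_square_iff)
  have iclip: "integrable P (\<lambda>v. clip d r v c)" "integrable P (\<lambda>v. clip d r v c * clip d r v c)" if "c < d" for c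
  proof -
    show "integrable P (\<lambda>v. clip d r v c)"
      by (rule P.integrable_const_bound[where B="\<bar>r\<bar>"]) (use bclip that mclip in auto)
    show "integrable P (\<lambda>v. clip d r v c * clip d r v c)"
    proof (rule P.integrable_const_bound[where B="r * r"])
      have "clip d r v c * clip d r v c \<le> r * r" for v using clip_coord_sq[OF that, of r v] by (simp add: power2_eq_square)
      then show "AE v in P. norm (clip d r v c * clip d r v c) \<le> r * r" by (auto simp: abs_mult)
    qed (use that mclip in auto)
  qed
  have iphi: "integrable P (\<phi> c)" "integrable P (\<lambda>v. \<phi> c v * \<phi> c v)" if "c < d" for c
  proof -
    show "integrable P (\<phi> c)" unfolding \<phi>_def[abs_def] using iclip[OF that] by auto
    have "(\<lambda>v. \<phi> c v * \<phi> c v) = (\<lambda>v. clip d r v c * clip d r v c - 2 * mu c * clip d r v c + mu c * mu c)"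
      by (auto simp: \<phi>_def algebra_simps)
    then show "integrable P (\<lambda>v. \<phi> c v * \<phi> c v)" using iclip[OF that] by auto
  qed
  have mean_clip: "(\<integral>v. clip d r v c \<partial>P) = mu c" if "c < d" for c
  proof -
    have mc: "(\<lambda>v. v c) \<in> borel_measurable P"
      using that Ps unfolding Rd_def by (simp cong: measurable_cong_sets)
    have "(\<integral>v. clip d r v c \<partial>P) = (\<integral>v. v c \<partial>P)"
    proof (rule integral_cong_AE)
      show "AE v in P. clip d r v c = v c"
        using Pae by (rule AE_mp) (use that in \<open>auto intro!: AE_I2 simp: clip_def\<close>)
    qed (use mclip[OF that] mc in auto)
    also have "\<dots> = mu c" using that by (simp add: mu_def mean_def)
    finally show ?thesis .
  qed
  have int0: "(\<integral>v. \<phi> c v \<partial>P) = 0" if "c < d" for c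
    unfolding \<phi>_def using iclip[OF that] mean_clip[OF that] by (simp add: P.prob_space)
  have var: "(\<integral>v. \<phi> c v * \<phi> c v \<partial>P) \<le> (\<integral>v. clip d r v c * clip d r v c \<partial>P)" if "c < d" for c
  proof -
    have "(\<lambda>v. \<phi> c v * \<phi> c v) = (\<lambda>v. clip d r v c * clip d r v c - 2 * mu c * \<phi> c v - mu c * mu c)"
      by (auto simp: \<phi>_def algebra_simps)
    then have "(\<integral>v. \<phi> c v * \<phi> c v \<partial>P) = (\<integral>v. clip d r v c * clip d r v c \<partial>P) - 2 * mu c * (\<integral>v. \<phi> c v \<partial>P) - mu c * mu c"
      using iclip[OF that] iphi[OF that] by (simp add: P.prob_space)
    then show ?thesis using int0[OF that] by simp
  qed
  have sumvar: "(\<Sum>c<d. \<integral>v. \<phi> c v * \<phi> c v \<partial>P) \<le> r\<^sup>2"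
  proof -
    have "(\<Sum>c<d. \<integral>v. \<phi> c v * \<phi> c v \<partial>P) \<le> (\<Sum>c<d. \<integral>v. clip d r v c * clip d r v c \<partial>P)"
      by (intro sum_mono var) auto
    also have "\<dots> = (\<integral>v. sqnorm d (clip d r v) \<partial>P)"
      unfolding sqnorm_def power2_eq_square by (simp add: iclip(2))
    also have "\<dots> \<le> (\<integral>v. r\<^sup>2 \<partial>P)"
    proof (rule integral_mono)
      show "integrable P (\<lambda>v. sqnorm d (clip d r v))"
        unfolding sqnorm_def power2_eq_square by (intro Bochner_Integration.integrable_sum) (use iclip in auto)
    qed (auto simp: sqnorm_clip)
    also have "\<dots> = r\<^sup>2" by (simp add: P.prob_space)
    finally show ?thesis .
  qed
  have sqA_eq: "sqA d r S mu x = (\<Sum>c<d. \<Sum>i\<in>S. \<Sum>j\<in>S. \<phi> c (x i) * \<phi> c (x j)) / k\<^sup>2" for x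
  proof -
    have "sqA d r S mu x = (\<Sum>c<d. ((\<Sum>i\<in>S. \<phi> c (x i)) / k)\<^sup>2)"
      by (simp add: sqA_def sqnorm_def \<phi>_def k_def)
    also have "\<dots> = (\<Sum>c<d. (\<Sum>i\<in>S. \<Sum>j\<in>S. \<phi> c (x i) * \<phi> c (x j)) / k\<^sup>2)"
      by (simp add: power_divide power2_eq_square sum_product)
    finally show ?thesis by (simp add: sum_divide_distrib)
  qed
  have ij: "integrable (PiM {..<n} (\<lambda>_. P)) (\<lambda>x. \<phi> c (x i) * \<phi> c (x j)) \<and>
         (\<integral>x. \<phi> c (x i) * \<phi> c (x j) \<partial>PiM {..<n} (\<lambda>_. P)) = (if i = j then (\<integral>v. \<phi> c v * \<phi> c v \<partial>P) else 0)"
    if "c < d" "i \<in> S" "j \<in> S" for c i j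
    using PiM_integral_ij[OF Pp _ _ _ iphi[OF that(1)], of "{..<n}" i j] that int0[OF that(1)] subsetD[OF S(1) that(2)] subsetD[OF S(1) that(3)] by auto
  have int_sum: "integrable (PiM {..<n} (\<lambda>_. P)) (\<lambda>x. \<Sum>c<d. \<Sum>i\<in>S. \<Sum>j\<in>S. \<phi> c (x i) * \<phi> c (x j))"
    using ij by (intro Bochner_Integration.integrable_sum) auto
  have "(\<integral>x. (\<Sum>c<d. \<Sum>i\<in>S. \<Sum>j\<in>S. \<phi> c (x i) * \<phi> c (x j)) \<partial>PiM {..<n} (\<lambda>_. P))
      = (\<Sum>c<d. \<Sum>i\<in>S. \<Sum>j\<in>S. (\<integral>x. \<phi> c (x i) * \<phi> c (x j) \<partial>PiM {..<n} (\<lambda>_. P)))"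
    using ij by (simp add: Bochner_Integration.integral_sum Bochner_Integration.integrable_sum)
  also have "\<dots> = (\<Sum>c<d. \<Sum>i\<in>S. \<Sum>j\<in>S. (if i = j then (\<integral>v. \<phi> c v * \<phi> c v \<partial>P) else 0))"
    using ij by (intro sum.cong refl) auto
  also have "\<dots> = (\<Sum>c<d. k * (\<integral>v. \<phi> c v * \<phi> c v \<partial>P))"
    using finS by (simp add: k_def)
  also have "\<dots> \<le> k * r\<^sup>2"
    using sumvar k0 by (simp add: sum_distrib_left[symmetric])
  finally have bound: "(\<integral>x. (\<Sum>c<d. \<Sum>i\<in>S. \<Sum>j\<in>S. \<phi> c (x i) * \<phi> c (x j)) \<partial>PiM {..<n} (\<lambda>_. P)) \<le> k * r\<^sup>2" .
  have nonneg: "0 \<le> sqA d r S mu x" for x by (simp add: sqA_def sqnorm_nonneg)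
  have "(\<integral>\<^sup>+x. ennreal (sqA d r S mu x) \<partial>PiM {..<n} (\<lambda>_. P)) = ennreal (\<integral>x. sqA d r S mu x \<partial>PiM {..<n} (\<lambda>_. P))"
    unfolding sqA_eq using int_sum nonneg[unfolded sqA_eq]
    by (intro nn_integral_eq_integral) auto
  also have "(\<integral>x. sqA d r S mu x \<partial>PiM {..<n} (\<lambda>_. P)) \<le> r\<^sup>2 / k"
  proof -
    have "(\<integral>x. sqA d r S mu x \<partial>PiM {..<n} (\<lambda>_. P)) = (\<integral>x. (\<Sum>c<d. \<Sum>i\<in>S. \<Sum>j\<in>S. \<phi> c (x i) * \<phi> c (x j)) \<partial>PiM {..<n} (\<lambda>_. P)) / k\<^sup>2"
      unfolding sqA_eq by simp
    also have "\<dots> \<le> k * r\<^sup>2 / k\<^sup>2" using bound k0 by (intro divide_right_mono) auto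
    also have "\<dots> = r\<^sup>2 / k" using k0 by (simp add: power2_eq_square)
    finally show ?thesis .
  qed
  finally show ?thesis unfolding mu_def k_def by (simp add: ennreal_leI)
qed



lemma sqA_meas[measurable]:
  assumes "S \<subseteq> {..<n}"
  shows "sqA d r S mu \<in> borel_measurable (Samp d n)"
proof -
  have [measurable]: "(\<lambda>x. clip d r (x i) c) \<in> borel_measurable (Samp d n)" if "i \<in> S" "c < d" for i c
  proof -
    have [measurable]: "(\<lambda>x. x i) \<in> measurable (Samp d n) (Rd d)"
      using assms that unfolding Samp_def by (intro measurable_component_singleton) auto
    have "(\<lambda>v. v c) \<in> borel_measurable (Rd d)" using that unfolding Rd_def by (intro measurable_component_singleton) auto
    then show ?thesis by measurable
  qed
  show ?thesis unfolding sqA_def[abs_def] sqnorm_def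
    by (intro borel_measurable_sum borel_measurable_power borel_measurable_divide borel_measurable_diff) auto
qed

lemma risk_upper:
  assumes r: "0 < r" and lam: "\<And>i. i < n \<Longrightarrow> 0 \<le> lam i \<and> lam i \<le> 1"
    and t: "0 \<le> t" "t \<le> 1" and S: "S = {i\<in>{..<n}. lam i \<le> t}" and k: "card S > 0"
    and P: "P \<in> Dball d r" and Q: "Q \<in> adversaries d n lam P"
  shows "risk d n (Est d r S) P Q \<le> ennreal (10 * r\<^sup>2 * (1 / card S + t\<^sup>2))"
proof -
  have Sn: "S \<subseteq> {..<n}" using S by auto
  have finS: "finite S" using Sn finite_subset by blast
  have St: "\<And>i. i \<in> S \<Longrightarrow> lam i \<le> t" using S by auto
  define k where "k = real (card S)"
  have k0: "k > 0" using k by (simp add: k_def)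
  define mu where "mu = mean d P"
  have Pp: "prob_space P" using P by (simp add: Dball_def)
  have Qp: "prob_space Q" and Qs: "sets Q = sets (Tsp d n)"
    and Qm: "distr Q (Samp d n \<Otimes>\<^sub>M Bsp n) (\<lambda>(x, b, xt). (x, b)) = clean_law d n lam P"
    using Q by (auto simp: adversaries_def)
  define H where "H x b = 2 * sqA d r S mu x + 8 * r\<^sup>2 / k\<^sup>2 * (cb S b)\<^sup>2" for x b
  have Hnn: "0 \<le> H x b" for x b by (simp add: H_def sqA_def sqnorm_nonneg)
  have Hm[measurable]: "(\<lambda>p. ennreal (H (fst p) (snd p))) \<in> borel_measurable (Samp d n \<Otimes>\<^sub>M Bsp n)"
    unfolding H_def using Sn by measurable
  have "risk d n (Est d r S) P Q \<le> (\<integral>\<^sup>+\<omega>. ennreal (H (fst \<omega>) (fst (snd \<omega>))) \<partial>Q)"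
    unfolding risk_def
  proof (rule nn_integral_mono)
    fix \<omega> :: "(nat \<Rightarrow> nat \<Rightarrow> real) \<times> (nat \<Rightarrow> bool) \<times> (nat \<Rightarrow> nat \<Rightarrow> real)"
    obtain x b xt where \<omega>: "\<omega> = (x, b, xt)" by (cases \<omega>) auto
    show "ennreal (sqnorm d (\<lambda>i. Est d r S (zmap n \<omega>) i - mean d P i)) \<le> ennreal (H (fst \<omega>) (fst (snd \<omega>)))"
      using pointwise_bound[OF Sn finS k, of d r x b xt mu] by (intro ennreal_leI) (simp add: \<omega> H_def mu_def k_def)
  qed
  also have "\<dots> = (\<integral>\<^sup>+p. ennreal (H (fst p) (snd p)) \<partial>distr Q (Samp d n \<Otimes>\<^sub>M Bsp n) (\<lambda>(x, b, xt). (x, b)))"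
  proof -
    have pm: "(\<lambda>(x, b, xt). (x, b)) \<in> measurable Q (Samp d n \<Otimes>\<^sub>M Bsp n)"
      using Qs by (simp cong: measurable_cong_sets)
    show ?thesis using Hm by (subst nn_integral_distr[OF pm]) (simp_all add: case_prod_beta)
  qed
  also have "\<dots> = (\<integral>\<^sup>+p. ennreal (H (fst p) (snd p)) \<partial>(PiM {..<n} (\<lambda>_. P) \<Otimes>\<^sub>M PiM {..<n} (\<lambda>i. measure_pmf (bernoulli_pmf (lam i)))))"
    by (simp add: Qm clean_law_def)
  also have "\<dots> = (\<integral>\<^sup>+x. \<integral>\<^sup>+b. ennreal (H x b) \<partial>PiM {..<n} (\<lambda>i. measure_pmf (bernoulli_pmf (lam i))) \<partial>PiM {..<n} (\<lambda>_. P))"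
  proof -
    interpret B: prob_space "PiM {..<n} (\<lambda>i. measure_pmf (bernoulli_pmf (lam i)))"
      by (intro prob_space_PiM prob_space_measure_pmf)
    have Hm': "(\<lambda>p. ennreal (H (fst p) (snd p))) \<in> borel_measurable (PiM {..<n} (\<lambda>_. P) \<Otimes>\<^sub>M PiM {..<n} (\<lambda>i. measure_pmf (bernoulli_pmf (lam i))))"
    proof -
      have "sets (PiM {..<n} (\<lambda>_. P) \<Otimes>\<^sub>M PiM {..<n} (\<lambda>i. measure_pmf (bernoulli_pmf (lam i)))) = sets (Samp d n \<Otimes>\<^sub>M Bsp n)"
        using P unfolding Samp_def Bsp_def Dball_def by (intro sets_pair_measure_cong sets_PiM_cong) auto
      then show ?thesis using Hm by (simp cong: measurable_cong_sets)
    qed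
    show ?thesis using B.nn_integral_fst[OF Hm'] by simp
  qed
  also have "\<dots> = (\<integral>\<^sup>+x. ennreal (2 * sqA d r S mu x) + (\<integral>\<^sup>+b. ennreal (8 * r\<^sup>2 / k\<^sup>2 * (cb S b)\<^sup>2) \<partial>PiM {..<n} (\<lambda>i. measure_pmf (bernoulli_pmf (lam i)))) \<partial>PiM {..<n} (\<lambda>_. P))"
  proof (rule nn_integral_cong)
    fix x
    interpret B: prob_space "PiM {..<n} (\<lambda>i. measure_pmf (bernoulli_pmf (lam i)))"
      by (intro prob_space_PiM prob_space_measure_pmf)
    have cbm: "(\<lambda>b. ennreal (8 * r\<^sup>2 / k\<^sup>2 * (cb S b)\<^sup>2)) \<in> borel_measurable (PiM {..<n} (\<lambda>i. measure_pmf (bernoulli_pmf (lam i))))"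
    proof -
      have "cb S \<in> borel_measurable (PiM {..<n} (\<lambda>i. measure_pmf (bernoulli_pmf (lam i))))"
        using cb_meas[OF Sn] unfolding Bsp_def by (simp cong: measurable_cong_sets)
      then show ?thesis by measurable
    qed
    have cbm2: "(\<lambda>b. 8 * r\<^sup>2 * (cb S b)\<^sup>2 / k\<^sup>2) \<in> borel_measurable (PiM {..<n} (\<lambda>i. measure_pmf (bernoulli_pmf (lam i))))"
    proof -
      have "cb S \<in> borel_measurable (PiM {..<n} (\<lambda>i. measure_pmf (bernoulli_pmf (lam i))))"
        using cb_meas[OF Sn] unfolding Bsp_def by (simp cong: measurable_cong_sets)
      then show ?thesis by measurable
    qed
    have "(\<integral>\<^sup>+b. ennreal (H x b) \<partial>PiM {..<n} (\<lambda>i. measure_pmf (bernoulli_pmf (lam i))))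
       = (\<integral>\<^sup>+b. ennreal (2 * sqA d r S mu x) + ennreal (8 * r\<^sup>2 / k\<^sup>2 * (cb S b)\<^sup>2) \<partial>PiM {..<n} (\<lambda>i. measure_pmf (bernoulli_pmf (lam i))))"
      unfolding H_def by (intro nn_integral_cong ennreal_plus) (auto simp: sqA_def sqnorm_nonneg)
    also have "\<dots> = ennreal (2 * sqA d r S mu x) + (\<integral>\<^sup>+b. ennreal (8 * r\<^sup>2 / k\<^sup>2 * (cb S b)\<^sup>2) \<partial>PiM {..<n} (\<lambda>i. measure_pmf (bernoulli_pmf (lam i))))"
      by (subst nn_integral_add) (auto simp: cbm cbm2 B.emeasure_space_1)
    finally show "(\<integral>\<^sup>+b. ennreal (H x b) \<partial>PiM {..<n} (\<lambda>i. measure_pmf (bernoulli_pmf (lam i)))) = \<dots>" .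
  qed
  also have "\<dots> = (\<integral>\<^sup>+x. ennreal (2 * sqA d r S mu x) \<partial>PiM {..<n} (\<lambda>_. P)) + (\<integral>\<^sup>+b. ennreal (8 * r\<^sup>2 / k\<^sup>2 * (cb S b)\<^sup>2) \<partial>PiM {..<n} (\<lambda>i. measure_pmf (bernoulli_pmf (lam i))))"
  proof -
    interpret PP: prob_space "PiM {..<n} (\<lambda>_. P)"
      by (intro prob_space_PiM Pp)
    have sm: "sqA d r S mu \<in> borel_measurable (PiM {..<n} (\<lambda>_. P))"
      using sqA_meas[OF Sn, of d r mu] P unfolding Samp_def Dball_def by (simp cong: measurable_cong_sets sets_PiM_cong)
    have sm2: "(\<lambda>x. ennreal (2 * sqA d r S mu x)) \<in> borel_measurable (PiM {..<n} (\<lambda>_. P))" using sm by measurable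
    show ?thesis by (subst nn_integral_add) (auto simp: sm sm2 PP.emeasure_space_1)
  qed
  also have "\<dots> \<le> ennreal (2 * (r\<^sup>2 / k)) + ennreal (8 * r\<^sup>2 / k\<^sup>2) * ennreal (k\<^sup>2 * t\<^sup>2 + k * t)"
  proof (rule add_mono)
    have "(\<integral>\<^sup>+x. ennreal (2 * sqA d r S mu x) \<partial>PiM {..<n} (\<lambda>_. P)) = 2 * (\<integral>\<^sup>+x. ennreal (sqA d r S mu x) \<partial>PiM {..<n} (\<lambda>_. P))"
    proof -
      have sm: "sqA d r S mu \<in> borel_measurable (PiM {..<n} (\<lambda>_. P))"
        using sqA_meas[OF Sn, of d r mu] P unfolding Samp_def Dball_def by (simp cong: measurable_cong_sets sets_PiM_cong)
      have "(\<integral>\<^sup>+x. ennreal (2 * sqA d r S mu x) \<partial>PiM {..<n} (\<lambda>_. P)) = (\<integral>\<^sup>+x. 2 * ennreal (sqA d r S mu x) \<partial>PiM {..<n} (\<lambda>_. P))"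
        using sqA_def sqnorm_nonneg by (intro nn_integral_cong) (simp add: ennreal_mult)
      also have "\<dots> = 2 * (\<integral>\<^sup>+x. ennreal (sqA d r S mu x) \<partial>PiM {..<n} (\<lambda>_. P))"
        by (rule nn_integral_cmult) (rule measurable_compose[OF sm measurable_ennreal])
      finally show ?thesis .
    qed
    also have "\<dots> \<le> 2 * ennreal (r\<^sup>2 / k)"
      using E2[OF P Sn k] unfolding mu_def k_def by (intro mult_left_mono) auto
    also have "\<dots> = ennreal (2 * (r\<^sup>2 / k))" using k0 by (subst ennreal_mult) auto
    finally show "(\<integral>\<^sup>+x. ennreal (2 * sqA d r S mu x) \<partial>PiM {..<n} (\<lambda>_. P)) \<le> ennreal (2 * (r\<^sup>2 / k))" .
  next
    have cbm: "cb S \<in> borel_measurable (PiM {..<n} (\<lambda>i. measure_pmf (bernoulli_pmf (lam i))))"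
      using cb_meas[OF Sn] unfolding Bsp_def by (simp cong: measurable_cong_sets)
    have "(\<integral>\<^sup>+b. ennreal (8 * r\<^sup>2 / k\<^sup>2 * (cb S b)\<^sup>2) \<partial>PiM {..<n} (\<lambda>i. measure_pmf (bernoulli_pmf (lam i))))
        = ennreal (8 * r\<^sup>2 / k\<^sup>2) * (\<integral>\<^sup>+b. ennreal ((cb S b)\<^sup>2) \<partial>PiM {..<n} (\<lambda>i. measure_pmf (bernoulli_pmf (lam i))))"
    proof -
      have m: "(\<lambda>b. ennreal ((cb S b)\<^sup>2)) \<in> borel_measurable (PiM {..<n} (\<lambda>i. measure_pmf (bernoulli_pmf (lam i))))"
        using cbm by measurable
      have "(\<integral>\<^sup>+b. ennreal (8 * r\<^sup>2 / k\<^sup>2 * (cb S b)\<^sup>2) \<partial>PiM {..<n} (\<lambda>i. measure_pmf (bernoulli_pmf (lam i))))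
          = (\<integral>\<^sup>+b. ennreal (8 * r\<^sup>2 / k\<^sup>2) * ennreal ((cb S b)\<^sup>2) \<partial>PiM {..<n} (\<lambda>i. measure_pmf (bernoulli_pmf (lam i))))"
        by (intro nn_integral_cong ennreal_mult) auto
      also have "\<dots> = ennreal (8 * r\<^sup>2 / k\<^sup>2) * (\<integral>\<^sup>+b. ennreal ((cb S b)\<^sup>2) \<partial>PiM {..<n} (\<lambda>i. measure_pmf (bernoulli_pmf (lam i))))"
        by (rule nn_integral_cmult[OF m])
      finally show ?thesis .
    qed
    also have "\<dots> \<le> ennreal (8 * r\<^sup>2 / k\<^sup>2) * ennreal (k\<^sup>2 * t\<^sup>2 + k * t)"
      using E1[OF Sn lam St t(1)] unfolding k_def by (intro mult_left_mono) auto
    finally show "(\<integral>\<^sup>+b. ennreal (8 * r\<^sup>2 / k\<^sup>2 * (cb S b)\<^sup>2) \<partial>PiM {..<n} (\<lambda>i. measure_pmf (bernoulli_pmf (lam i))))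
        \<le> ennreal (8 * r\<^sup>2 / k\<^sup>2) * ennreal (k\<^sup>2 * t\<^sup>2 + k * t)" .
  qed
  also have "\<dots> = ennreal (2 * (r\<^sup>2 / k) + 8 * r\<^sup>2 / k\<^sup>2 * (k\<^sup>2 * t\<^sup>2 + k * t))"
    using k0 t by (simp add: ennreal_mult[symmetric] ennreal_plus[symmetric] del: ennreal_plus)
  also have "\<dots> \<le> ennreal (10 * r\<^sup>2 * (1 / card S + t\<^sup>2))"
  proof (rule ennreal_leI)
    have e: "8 * r\<^sup>2 / k\<^sup>2 * (k\<^sup>2 * t\<^sup>2 + k * t) = 8 * r\<^sup>2 * t\<^sup>2 + 8 * r\<^sup>2 * t / k"
      using k0 by (simp add: field_simps power2_eq_square)
    have a: "r\<^sup>2 * t / k \<le> r\<^sup>2 / k" using t k0 mult_left_mono[of t 1 "r\<^sup>2"] by (intro divide_right_mono) auto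
    have b: "10 * r\<^sup>2 * (1 / k + t\<^sup>2) = 10 * (r\<^sup>2 / k) + 10 * (r\<^sup>2 * t\<^sup>2)" by (simp add: field_simps)
    have c: "8 * r\<^sup>2 * t\<^sup>2 + 8 * r\<^sup>2 * t / k = 8 * (r\<^sup>2 * t\<^sup>2) + 8 * (r\<^sup>2 * t / k)" by simp
    have d: "0 \<le> r\<^sup>2 * t\<^sup>2" by simp
    show "2 * (r\<^sup>2 / k) + 8 * r\<^sup>2 / k\<^sup>2 * (k\<^sup>2 * t\<^sup>2 + k * t) \<le> 10 * r\<^sup>2 * (1 / card S + t\<^sup>2)"
      unfolding e k_def[symmetric] b c using a d by linarith
  qed
  finally show ?thesis .
qed



lemma upper_main:
  assumes r: "0 < r" and lam: "\<forall>i<n. 0 \<le> lam i \<and> lam i \<le> 1"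
  shows "minimax d n lam (Dball d r) \<le> ennreal (10 * r\<^sup>2) * fval n lam 1"
  unfolding fval_def
proof (rule ennreal_mult_INF_le)
  show "ennreal (10 * r\<^sup>2) < top" by simp
  show "{0..1::real} \<noteq> {}" by simp
next
  fix t :: real assume t: "t \<in> {0..1}"
  define S where "S = {i\<in>{..<n}. lam i \<le> t}"
  show "minimax d n lam (Dball d r) \<le> ennreal (10 * r\<^sup>2) *
      (let N = card {i\<in>{..<n}. lam i \<le> t} in (if N = 0 then \<infinity> else ennreal (1 / real N)) + ennreal (t\<^sup>2))"
  proof (cases "card S = 0")
    case True
    have "ennreal (10 * r\<^sup>2) \<noteq> 0" using r by simp
    have c0: "card {i\<in>{..<n}. lam i \<le> t} = 0" using True by (simp add: S_def)
    have "(let N = card {i\<in>{..<n}. lam i \<le> t} in (if N = 0 then \<infinity> else ennreal (1 / real N)) + ennreal (t\<^sup>2)) = \<infinity>"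
      by (simp only: Let_def c0 if_True) simp
    then show ?thesis using \<open>ennreal (10 * r\<^sup>2) \<noteq> 0\<close> by (simp add: ennreal_mult_top)
  next
    case False
    have lam': "\<And>i. i < n \<Longrightarrow> 0 \<le> lam i \<and> lam i \<le> 1" using lam by auto
    have Sn: "S \<subseteq> {..<n}" by (auto simp: S_def)
    have kpos: "card S > 0" using False by simp
    have "minimax d n lam (Dball d r) \<le> (SUP P\<in>Dball d r. SUP Q\<in>adversaries d n lam P. risk d n (Est d r S) P Q)"
      unfolding minimax_def by (rule INF_lower) (rule Est_est[OF Sn])
    also have "\<dots> \<le> ennreal (10 * r\<^sup>2 * (1 / card S + t\<^sup>2))"
      using t by (intro SUP_least risk_upper[OF r lam' _ _ S_def kpos]) auto
    also have "\<dots> = ennreal (10 * r\<^sup>2) * (ennreal (1 / real (card S)) + ennreal (t\<^sup>2))"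
      by (simp add: ennreal_mult ennreal_plus)
    finally have fin: "minimax d n lam (Dball d r) \<le> ennreal (10 * r\<^sup>2) * (ennreal (1 / real (card S)) + ennreal (t\<^sup>2))" .
    have "(let N = card {i\<in>{..<n}. lam i \<le> t} in (if N = 0 then \<infinity> else ennreal (1 / real N)) + ennreal (t\<^sup>2))
        = ennreal (1 / real (card S)) + ennreal (t\<^sup>2)"
      by (simp only: Let_def S_def[symmetric] False if_False)
    then show ?thesis using fin by simp
  qed
qed

theorem theorem1:
  shows "\<exists>c1 c2::real. 0 < c1 \<and> c1 \<le> c2 \<and>
    (\<forall>d::nat. \<forall>r::real. \<forall>n::nat. \<forall>lam::nat \<Rightarrow> real.
       d \<ge> 1 \<longrightarrow> r > 0 \<longrightarrow> n \<ge> 1 \<longrightarrow> (\<forall>i<n. 0 \<le> lam i \<and> lam i \<le> 1) \<longrightarrow>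
         ennreal (c1 * r\<^sup>2) * fval n lam 1 \<le> minimax d n lam (Dball d r) \<and>
         minimax d n lam (Dball d r) \<le> ennreal (c2 * r\<^sup>2) * fval n lam 1)"
proof -
  have main: "\<forall>d::nat. \<forall>r::real. \<forall>n::nat. \<forall>lam::nat \<Rightarrow> real.
       d \<ge> 1 \<longrightarrow> r > 0 \<longrightarrow> n \<ge> 1 \<longrightarrow> (\<forall>i<n. 0 \<le> lam i \<and> lam i \<le> 1) \<longrightarrow>
         ennreal (1/128 * r\<^sup>2) * fval n lam 1 \<le> minimax d n lam (Dball d r) \<and>
         minimax d n lam (Dball d r) \<le> ennreal (10 * r\<^sup>2) * fval n lam 1"
  proof (intro allI impI conjI)
    fix d :: nat and r :: real and n :: nat and lam :: "nat \<Rightarrow> real"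
    assume d: "1 \<le> d" and r: "0 < r" and n: "1 \<le> n" and lam: "\<forall>i<n. 0 \<le> lam i \<and> lam i \<le> 1"
    show "ennreal (1/128 * r\<^sup>2) * fval n lam 1 \<le> minimax d n lam (Dball d r)"
      unfolding minimax_def by (rule INF_greatest) (rule lower_main[OF d r n lam])
    show "minimax d n lam (Dball d r) \<le> ennreal (10 * r\<^sup>2) * fval n lam 1"
      by (rule upper_main[OF r lam])
  qed
  show ?thesis by (rule exI[of _ "1/128"], rule exI[of _ 10]) (use main in simp)
qed


end
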